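(* For every $q\in(0,1/2)$, the functions $L\mapsto T_{\rm rel}(L)$, $L\mapsto T_{\rm mix}(L)$ and $L\mapsto T_{\rm hit}(L)$ are non-decreasing on the positive integers.
   Context: Fix $q\in(0,1/2)$, $p=1-q$. For $\Lambda=\{1,\dots,L\}$ the East process is the Markov chain on $\{0,1\}^\Lambda$ with generator $\mathcal L f(\sigma)=\sum_{x}c_x(\sigma)[\pi_x(f)-f](\sigma)$, $c_1\equiv1$, $c_x(\sigma)=1-\sigma_{x-1}$ ($x\ge2$), $\pi_x(f)$ the average over $\sigma_x\sim$ Bernoulli$(p)$; $\pi$ is the product Bernoulli$(p)$ measure. $T_{\rm rel}(L)$ is the inverse spectral gap; $T_{\rm mix}(L)=\inf\{t:\max_\eta\|\mathbb P_\eta(\eta(t)\in\cdot)-\pi\|_{TV}\le1/4\}$; $T_{\rm hit}(L)=\mathbb E_{\mathbb 10}[\tau_{\eta_L=1}]$ where $\mathbb 10$ has $\sigma_x=1$ for $x<L$, $\sigma_L=0$, and $\tau_{\eta_L=1}$ is the hitting time of $\{\eta_L=1\}$. *)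

theory Defs
  imports "HOL-Analysis.Analysis"
begin

text \<open>Configurations on \<open>\<Lambda> = {1..L}\<close>: \<open>\<sigma> x = True\<close> means \<open>\<sigma>_x = 1\<close>;
  sites outside \<open>{1..L}\<close> are fixed to False so the state space is finite.\<close>
definition east_states :: "nat \<Rightarrow> (nat \<Rightarrow> bool) set" where
  "east_states L = {\<sigma>. \<forall>x. \<sigma> x \<longrightarrow> x \<in> {1..L}}"

definition east_c :: "(nat \<Rightarrow> bool) \<Rightarrow> nat \<Rightarrow> real" where
  "east_c \<sigma> x = (if x = 1 then 1 else if \<sigma> (x - 1) then 0 else 1)"

definition east_gen :: "real \<Rightarrow> nat \<Rightarrow> ((nat \<Rightarrow> bool) \<Rightarrow> real) \<Rightarrow> (nat \<Rightarrow> bool) \<Rightarrow> real" where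
  "east_gen q L f \<sigma> = (\<Sum>x\<in>{1..L}. east_c \<sigma> x *
      ((1 - q) * f (\<sigma>(x := True)) + q * f (\<sigma>(x := False)) - f \<sigma>))"

definition east_rate :: "real \<Rightarrow> nat \<Rightarrow> (nat \<Rightarrow> bool) \<Rightarrow> (nat \<Rightarrow> bool) \<Rightarrow> real" where
  "east_rate q L \<eta> \<sigma> = east_gen q L (\<lambda>\<zeta>. if \<zeta> = \<sigma> then 1 else 0) \<eta>"

definition east_pi :: "real \<Rightarrow> nat \<Rightarrow> (nat \<Rightarrow> bool) \<Rightarrow> real" where
  "east_pi q L \<sigma> = (\<Prod>x\<in>{1..L}. if \<sigma> x then 1 - q else q)"

definition east_gap :: "real \<Rightarrow> nat \<Rightarrow> real" where
  "east_gap q L = Inf {ev. ev > 0 \<and> (\<exists>f. (\<exists>\<sigma>\<in>east_states L. f \<sigma> \<noteq> 0) \<and>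
      (\<forall>\<sigma>\<in>east_states L. - east_gen q L f \<sigma> = ev * f \<sigma>))}"

definition T_rel :: "real \<Rightarrow> nat \<Rightarrow> real" where
  "T_rel q L = 1 / east_gap q L"

fun mat_pow :: "'a set \<Rightarrow> ('a \<Rightarrow> 'a \<Rightarrow> real) \<Rightarrow> nat \<Rightarrow> 'a \<Rightarrow> 'a \<Rightarrow> real" where
  "mat_pow S Q 0 \<eta> \<sigma> = (if \<eta> = \<sigma> then 1 else 0)"
| "mat_pow S Q (Suc n) \<eta> \<sigma> = (\<Sum>\<zeta>\<in>S. Q \<eta> \<zeta> * mat_pow S Q n \<zeta> \<sigma>)"

definition mat_exp :: "'a set \<Rightarrow> ('a \<Rightarrow> 'a \<Rightarrow> real) \<Rightarrow> real \<Rightarrow> 'a \<Rightarrow> 'a \<Rightarrow> real" where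
  "mat_exp S Q t \<eta> \<sigma> = (\<Sum>n. t ^ n / fact n * mat_pow S Q n \<eta> \<sigma>)"

text \<open>Law at time t of the East process started at \<eta>: \<open>P_\<eta>(\<eta>(t) = \<sigma>) = e^{tQ}(\<eta>,\<sigma>)\<close>.\<close>
definition east_heat :: "real \<Rightarrow> nat \<Rightarrow> real \<Rightarrow> (nat \<Rightarrow> bool) \<Rightarrow> (nat \<Rightarrow> bool) \<Rightarrow> real" where
  "east_heat q L t \<eta> \<sigma> = mat_exp (east_states L) (east_rate q L) t \<eta> \<sigma>"

definition east_tv :: "real \<Rightarrow> nat \<Rightarrow> real \<Rightarrow> (nat \<Rightarrow> bool) \<Rightarrow> real" where
  "east_tv q L t \<eta> = (1/2) * (\<Sum>\<sigma>\<in>east_states L. \<bar>east_heat q L t \<eta> \<sigma> - east_pi q L \<sigma>\<bar>)"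

definition T_mix :: "real \<Rightarrow> nat \<Rightarrow> real" where
  "T_mix q L = Inf {t. 0 \<le> t \<and> (\<forall>\<eta>\<in>east_states L. east_tv q L t \<eta> \<le> 1/4)}"

text \<open>Hitting time of \<open>A = {\<eta>_L = 1}\<close>: \<open>P_\<eta>(\<tau>_A > t)\<close> is given by the semigroup of the chain
  killed on entering A (rate matrix restricted to the complement of A), and
  \<open>E_\<eta>[\<tau>_A] = \<integral>_0^\<infinity> P_\<eta>(\<tau>_A > t) dt\<close>.\<close>
definition east_target :: "nat \<Rightarrow> (nat \<Rightarrow> bool) set" where
  "east_target L = {\<sigma>\<in>east_states L. \<sigma> L}"

definition east_survival :: "real \<Rightarrow> nat \<Rightarrow> (nat \<Rightarrow> bool) \<Rightarrow> real \<Rightarrow> real" where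
  "east_survival q L \<eta> t =
     (\<Sum>\<sigma>\<in>east_states L - east_target L.
        mat_exp (east_states L - east_target L) (east_rate q L) t \<eta> \<sigma>)"

definition east_start :: "nat \<Rightarrow> (nat \<Rightarrow> bool)" where
  "east_start L = (\<lambda>x. x \<in> {1..<L})"

definition T_hit :: "real \<Rightarrow> nat \<Rightarrow> real" where
  "T_hit q L = integral {0..} (east_survival q L (east_start L))"

end

theory Submission
  imports Defs "HOL-Probability.Distributions"
begin

lemma sum_ind_mult[simp]:
  assumes "finite S"
  shows "(\<Sum>y\<in>S. (if a = y then c else 0) * F y) = (if a \<in> S then c * F a else (0::real))"
proof -
  have "(\<Sum>y\<in>S. (if a = y then c else 0) * F y) = (\<Sum>y\<in>S. if a = y then c * F a else 0)"
    by (intro sum.cong) auto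
  then show ?thesis using assms by simp
qed

lemma sum_mult_ind[simp]:
  assumes "finite S"
  shows "(\<Sum>y\<in>S. F y * (if y = b then c else 0)) = (if b \<in> S then F b * c else (0::real))"
proof -
  have "(\<Sum>y\<in>S. F y * (if y = b then c else 0)) = (\<Sum>y\<in>S. if b = y then F b * c else 0)"
    by (intro sum.cong) auto
  then show ?thesis using assms by simp
qed

lemma mat_pow_bound:
  assumes "finite S" "\<And>a b. \<bar>Q a b\<bar> \<le> B"
  shows "\<bar>mat_pow S Q n a b\<bar> \<le> (real (card S) * B) ^ n"
proof (induction n arbitrary: a)
  case 0 then show ?case by simp
next
  case (Suc n)
  have B0: "0 \<le> B" using assms(2)[of a a] by linarith
  have "\<bar>mat_pow S Q (Suc n) a b\<bar> \<le> (\<Sum>z\<in>S. \<bar>Q a z * mat_pow S Q n z b\<bar>)"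
    by (simp add: sum_abs)
  also have "\<dots> \<le> (\<Sum>z\<in>S. B * (real (card S) * B) ^ n)"
    unfolding abs_mult by (intro sum_mono mult_mono) (use assms Suc B0 in auto)
  also have "\<dots> = (real (card S) * B) ^ Suc n" by (simp add: algebra_simps)
  finally show ?case .
qed

lemma mat_exp_summable_abs:
  assumes "finite S" "\<And>a b. \<bar>Q a b\<bar> \<le> B"
  shows "summable (\<lambda>n. \<bar>t ^ n / fact n * mat_pow S Q n a b\<bar>)"
proof (rule summable_comparison_test')
  show "summable (\<lambda>n. inverse (fact n) * (\<bar>t\<bar> * (real (card S) * B)) ^ n)"
    by (rule summable_exp)
  fix n :: nat
  have "norm \<bar>t ^ n / fact n * mat_pow S Q n a b\<bar> = \<bar>t\<bar>^n / fact n * \<bar>mat_pow S Q n a b\<bar>"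
    by (simp add: abs_mult power_abs)
  also have "\<dots> \<le> \<bar>t\<bar>^n / fact n * (real (card S) * B) ^ n"
    by (intro mult_left_mono mat_pow_bound assms) auto
  also have "\<dots> = inverse (fact n) * (\<bar>t\<bar> * (real (card S) * B)) ^ n"
    by (simp add: power_mult_distrib field_simps)
  finally show "norm \<bar>t ^ n / fact n * mat_pow S Q n a b\<bar> \<le> inverse (fact n) * (\<bar>t\<bar> * (real (card S) * B)) ^ n" .
qed

lemma mat_exp_summable:
  assumes "finite S" "\<And>a b. \<bar>Q a b\<bar> \<le> B"
  shows "summable (\<lambda>n. t ^ n / fact n * mat_pow S Q n a b)"
  using summable_rabs_cancel[OF mat_exp_summable_abs[OF assms]] .

lemma mat_pow_add:
  assumes "finite S" "a \<in> S"
  shows "mat_pow S Q (m + n) a b = (\<Sum>z\<in>S. mat_pow S Q m a z * mat_pow S Q n z b)"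
  using assms(2)
proof (induction m arbitrary: a)
  case 0 then show ?case using assms(1) by simp
next
  case (Suc m)
  have "mat_pow S Q (Suc m + n) a b = (\<Sum>y\<in>S. Q a y * mat_pow S Q (m + n) y b)" by simp
  also have "\<dots> = (\<Sum>y\<in>S. Q a y * (\<Sum>z\<in>S. mat_pow S Q m y z * mat_pow S Q n z b))"
    using Suc by (intro sum.cong) auto
  also have "\<dots> = (\<Sum>y\<in>S. \<Sum>z\<in>S. Q a y * mat_pow S Q m y z * mat_pow S Q n z b)"
    by (simp add: sum_distrib_left mult.assoc)
  also have "\<dots> = (\<Sum>z\<in>S. \<Sum>y\<in>S. Q a y * mat_pow S Q m y z * mat_pow S Q n z b)"
    by (rule sum.swap)
  also have "\<dots> = (\<Sum>z\<in>S. (\<Sum>y\<in>S. Q a y * mat_pow S Q m y z) * mat_pow S Q n z b)"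
    by (simp add: sum_distrib_right)
  finally show ?case by simp
qed

lemma mat_pow_Suc_right:
  assumes "finite S" "a \<in> S" "b \<in> S"
  shows "mat_pow S Q (Suc n) a b = (\<Sum>z\<in>S. mat_pow S Q n a z * Q z b)"
proof -
  have "mat_pow S Q (n + 1) a b = (\<Sum>z\<in>S. mat_pow S Q n a z * mat_pow S Q 1 z b)"
    by (rule mat_pow_add[OF assms(1,2)])
  then show ?thesis using assms by simp
qed

lemma mat_pow_binom:
  assumes "finite S" "a \<in> S"
  shows "mat_pow S (\<lambda>x y. (if x = y then \<alpha> else 0) + Q x y) n a b =
     (\<Sum>k\<le>n. real (n choose k) * \<alpha> ^ (n - k) * mat_pow S Q k a b)"
  using assms(2)
proof (induction n arbitrary: a)
  case 0 then show ?case by simp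
next
  case (Suc n)
  define f where "f k = real (n choose k) * \<alpha> ^ (n - k) * mat_pow S Q k a b" for k
  define g where "g k = real (n choose k) * \<alpha> ^ (n - k) * mat_pow S Q (Suc k) a b" for k
  have "mat_pow S (\<lambda>x y. (if x = y then \<alpha> else 0) + Q x y) (Suc n) a b =
     (\<Sum>y\<in>S. (if a = y then \<alpha> else 0) * mat_pow S (\<lambda>x y. (if x = y then \<alpha> else 0) + Q x y) n y b)
     + (\<Sum>y\<in>S. Q a y * mat_pow S (\<lambda>x y. (if x = y then \<alpha> else 0) + Q x y) n y b)"
    by (simp add: distrib_right sum.distrib)
  also have "\<dots> = \<alpha> * (\<Sum>k\<le>n. f k) + (\<Sum>y\<in>S. Q a y * (\<Sum>k\<le>n. real (n choose k) * \<alpha> ^ (n - k) * mat_pow S Q k y b))"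
    using Suc assms(1) by (simp add: f_def)
  also have "(\<Sum>y\<in>S. Q a y * (\<Sum>k\<le>n. real (n choose k) * \<alpha> ^ (n - k) * mat_pow S Q k y b)) = (\<Sum>k\<le>n. g k)"
  proof -
    have "(\<Sum>y\<in>S. Q a y * (\<Sum>k\<le>n. real (n choose k) * \<alpha> ^ (n - k) * mat_pow S Q k y b))
      = (\<Sum>y\<in>S. \<Sum>k\<le>n. real (n choose k) * \<alpha> ^ (n - k) * (Q a y * mat_pow S Q k y b))"
      unfolding sum_distrib_left by (intro sum.cong refl) (simp add: algebra_simps)
    also have "\<dots> = (\<Sum>k\<le>n. \<Sum>y\<in>S. real (n choose k) * \<alpha> ^ (n - k) * (Q a y * mat_pow S Q k y b))"
      by (rule sum.swap)
    also have "\<dots> = (\<Sum>k\<le>n. g k)"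
      unfolding g_def by (intro sum.cong refl) (simp add: sum_distrib_left[symmetric])
    finally show ?thesis .
  qed
  finally have L: "mat_pow S (\<lambda>x y. (if x = y then \<alpha> else 0) + Q x y) (Suc n) a b = \<alpha> * (\<Sum>k\<le>n. f k) + (\<Sum>k\<le>n. g k)" .
  define F where "F k = real (Suc n choose k) * \<alpha> ^ (Suc n - k) * mat_pow S Q k a b" for k
  have "(\<Sum>k\<le>Suc n. F k) = F 0 + (\<Sum>k\<le>n. F (Suc k))" by (rule sum.atMost_Suc_shift)
  also have "(\<Sum>k\<le>n. F (Suc k)) = (\<Sum>k\<le>n. g k) + (\<Sum>k\<le>n. real (n choose Suc k) * \<alpha> ^ (n - k) * mat_pow S Q (Suc k) a b)"
    unfolding sum.distrib[symmetric] by (intro sum.cong refl) (simp add: F_def g_def algebra_simps)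
  also have "F 0 + ((\<Sum>k\<le>n. g k) + (\<Sum>k\<le>n. real (n choose Suc k) * \<alpha> ^ (n - k) * mat_pow S Q (Suc k) a b))
     = (\<Sum>k\<le>n. g k) + (F 0 + (\<Sum>k\<le>n. real (n choose Suc k) * \<alpha> ^ (n - k) * mat_pow S Q (Suc k) a b))" by simp
  also have "F 0 + (\<Sum>k\<le>n. real (n choose Suc k) * \<alpha> ^ (n - k) * mat_pow S Q (Suc k) a b)
     = (\<Sum>k\<le>Suc n. real (n choose k) * \<alpha> ^ (Suc n - k) * mat_pow S Q k a b)"
    by (subst sum.atMost_Suc_shift) (simp add: F_def)
  also have "\<dots> = (\<Sum>k\<le>n. real (n choose k) * \<alpha> ^ (Suc n - k) * mat_pow S Q k a b)"
    by simp
  also have "\<dots> = \<alpha> * (\<Sum>k\<le>n. f k)"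
    unfolding f_def sum_distrib_left by (intro sum.cong refl) (simp add: Suc_diff_le)
  finally have R: "(\<Sum>k\<le>Suc n. F k) = (\<Sum>k\<le>n. g k) + \<alpha> * (\<Sum>k\<le>n. f k)" .
  have E: "(\<Sum>k\<le>Suc n. real (Suc n choose k) * \<alpha> ^ (Suc n - k) * mat_pow S Q k a b) = (\<Sum>k\<le>Suc n. F k)"
    unfolding F_def ..
  show ?case unfolding L E R by (rule add.commute)
qed

lemma mat_pow_scale:
  "mat_pow S (\<lambda>x y. r * M x y) n a b = r ^ n * mat_pow S M n a b"
  by (induction n arbitrary: a) (simp_all add: sum_distrib_left algebra_simps)

lemma exp_sums_real: "(\<lambda>n. x ^ n / fact n) sums exp (x::real)"
  using exp_converges[of x] by (simp add: divide_inverse mult.commute)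

lemma summable_exp_abs: "summable (\<lambda>n. \<bar>(x::real) ^ n / fact n\<bar>)"
proof -
  have "summable (\<lambda>n. \<bar>x\<bar> ^ n / fact n)" using exp_sums_real[of "\<bar>x\<bar>"] by (rule sums_summable)
  then show ?thesis by (simp add: power_abs)
qed

lemma mat_exp_unif:
  assumes S: "finite S" "a \<in> S" and c: "c > 0" and B: "\<And>a b. \<bar>Q a b\<bar> \<le> B"
  shows "mat_exp S Q t a b = exp (- (c * t)) *
     (\<Sum>n. (c * t) ^ n / fact n * mat_pow S (\<lambda>x y. (if x = y then 1 else 0) + Q x y / c) n a b)"
proof -
  define A where "A k = t ^ k / fact k * mat_pow S Q k a b" for k
  define C where "C j = (c * t) ^ j / fact j" for j
  have sA: "summable (\<lambda>k. norm (A k))" unfolding A_def real_norm_def by (rule mat_exp_summable_abs[OF S(1) B])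
  have sC: "summable (\<lambda>k. norm (C k))" unfolding C_def real_norm_def by (rule summable_exp_abs)
  have eC: "(\<Sum>k. C k) = exp (c * t)" unfolding C_def using exp_sums_real by (rule sums_unique[symmetric])
  have key: "(c * t) ^ n / fact n * mat_pow S (\<lambda>x y. (if x = y then 1 else 0) + Q x y / c) n a b
      = (\<Sum>i\<le>n. A i * C (n - i))" for n
  proof -
    have P: "(\<lambda>x y. (if x = y then 1 else 0) + Q x y / c) = (\<lambda>x y. (1/c) * ((if x = y then c else 0) + Q x y))"
      using c by (auto simp: fun_eq_iff field_simps)
    have "(c * t) ^ n / fact n * mat_pow S (\<lambda>x y. (if x = y then 1 else 0) + Q x y / c) n a b
       = t ^ n / fact n * mat_pow S (\<lambda>x y. (if x = y then c else 0) + Q x y) n a b"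
    proof -
      have e1: "(c*t)^n * (1/c)^n = ((c*t)*(1/c))^n" by (rule power_mult_distrib[symmetric])
      have e2: "(c*t)*(1/c) = t" using c by simp
      show ?thesis unfolding P mat_pow_scale using e1 e2 c by (simp add: field_simps)
    qed
    also have "\<dots> = (\<Sum>i\<le>n. t ^ n / fact n * (real (n choose i) * c ^ (n - i) * mat_pow S Q i a b))"
      unfolding mat_pow_binom[OF S] sum_distrib_left ..
    also have "\<dots> = (\<Sum>i\<le>n. A i * C (n - i))"
    proof (intro sum.cong refl)
      fix i assume "i \<in> {..n}"
      then have i: "i \<le> n" by simp
      have f0: "fact i * fact (n - i) * (n choose i) = (fact n :: nat)" by (rule binomial_fact_lemma[OF i])
      have f: "(fact n::real) = real (n choose i) * fact i * fact (n - i)"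
      proof -
        have "(fact n::real) = of_nat (fact n)" by simp
        also have "\<dots> = of_nat (fact i * fact (n - i) * (n choose i))" by (simp only: f0)
        also have "\<dots> = real (n choose i) * fact i * fact (n - i)" by (simp add: of_nat_mult)
        finally show ?thesis .
      qed
      have tn: "t ^ n = t ^ i * t ^ (n - i)" using i by (simp add: power_add[symmetric])
      show "t ^ n / fact n * (real (n choose i) * c ^ (n - i) * mat_pow S Q i a b) = A i * C (n - i)"
      proof -
        have b: "real (n choose i) > 0" using i by simp
        show ?thesis unfolding A_def C_def f tn using b by (simp add: power_mult_distrib)
      qed
    qed
    finally show ?thesis .
  qed
  have "mat_exp S Q t a b * exp (c * t) = (\<Sum>k. A k) * (\<Sum>k. C k)"
    unfolding mat_exp_def A_def eC ..
  also have "\<dots> = (\<Sum>n. \<Sum>i\<le>n. A i * C (n - i))" by (rule Cauchy_product[OF sA sC])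
  also have "\<dots> = (\<Sum>n. (c * t) ^ n / fact n * mat_pow S (\<lambda>x y. (if x = y then 1 else 0) + Q x y / c) n a b)"
    unfolding key ..
  finally have "mat_exp S Q t a b * exp (c * t) = (\<Sum>n. (c * t) ^ n / fact n * mat_pow S (\<lambda>x y. (if x = y then 1 else 0) + Q x y / c) n a b)" .
  then show ?thesis by (simp add: exp_minus field_simps)
qed

lemma finite_states: "finite (east_states L)"
proof (rule finite_subset)
  show "east_states L \<subseteq> (\<lambda>A x. x \<in> A) ` Pow {1..L}"
  proof
    fix \<sigma> assume "\<sigma> \<in> east_states L"
    then have "{x. \<sigma> x} \<in> Pow {1..L}" "\<sigma> = (\<lambda>x. x \<in> {x. \<sigma> x})" by (auto simp: east_states_def)
    then show "\<sigma> \<in> (\<lambda>A x. x \<in> A) ` Pow {1..L}" by blast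
  qed
qed auto

lemma states_mono: "L \<le> L' \<Longrightarrow> east_states L \<subseteq> east_states L'"
  by (auto simp: east_states_def)

lemma upd_states: "\<sigma> \<in> east_states L \<Longrightarrow> x \<in> {1..L} \<Longrightarrow> \<sigma>(x := b) \<in> east_states L"
  by (auto simp: east_states_def)

lemma updF_states: "\<sigma> \<in> east_states L \<Longrightarrow> \<sigma>(x := False) \<in> east_states L"
  by (auto simp: east_states_def)

lemma east_c_cases: "east_c \<sigma> x = 0 \<or> east_c \<sigma> x = 1"
  by (simp add: east_c_def)

lemma east_c_nonneg: "0 \<le> east_c \<sigma> x" and east_c_le1: "east_c \<sigma> x \<le> 1"
  by (auto simp: east_c_def)

lemma east_rate_def2:
  "east_rate q L \<eta> \<zeta> = (\<Sum>x\<in>{1..L}. east_c \<eta> x *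
      ((1 - q) * (if \<eta>(x := True) = \<zeta> then 1 else 0) + q * (if \<eta>(x := False) = \<zeta> then 1 else 0)
        - (if \<eta> = \<zeta> then 1 else 0)))"
  by (simp add: east_rate_def east_gen_def)

lemma gen_sum:
  assumes "\<eta> \<in> east_states L"
  shows "east_gen q L f \<eta> = (\<Sum>\<zeta>\<in>east_states L. east_rate q L \<eta> \<zeta> * f \<zeta>)"
proof -
  have fin: "finite (east_states L)" by (rule finite_states)
  have "(\<Sum>\<zeta>\<in>east_states L. east_rate q L \<eta> \<zeta> * f \<zeta>)
     = (\<Sum>\<zeta>\<in>east_states L. \<Sum>x\<in>{1..L}. east_c \<eta> x *
      ((1 - q) * ((if \<eta>(x := True) = \<zeta> then 1 else 0) * f \<zeta>) + q * ((if \<eta>(x := False) = \<zeta> then 1 else 0) * f \<zeta>)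
        - (if \<eta> = \<zeta> then 1 else 0) * f \<zeta>))"
    unfolding east_rate_def2 sum_distrib_right by (intro sum.cong refl) (simp add: algebra_simps)
  also have "\<dots> = (\<Sum>x\<in>{1..L}. \<Sum>\<zeta>\<in>east_states L. east_c \<eta> x *
      ((1 - q) * ((if \<eta>(x := True) = \<zeta> then 1 else 0) * f \<zeta>) + q * ((if \<eta>(x := False) = \<zeta> then 1 else 0) * f \<zeta>)
        - (if \<eta> = \<zeta> then 1 else 0) * f \<zeta>))"
    by (rule sum.swap)
  also have "\<dots> = (\<Sum>x\<in>{1..L}. east_c \<eta> x *
      ((1 - q) * f (\<eta>(x := True)) + q * f (\<eta>(x := False)) - f \<eta>))"
  proof (intro sum.cong refl)
    fix x assume x: "x \<in> {1..L}"
    have "(\<Sum>\<zeta>\<in>east_states L. east_c \<eta> x *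
      ((1 - q) * ((if \<eta>(x := True) = \<zeta> then 1 else 0) * f \<zeta>) + q * ((if \<eta>(x := False) = \<zeta> then 1 else 0) * f \<zeta>)
        - (if \<eta> = \<zeta> then 1 else 0) * f \<zeta>))
      = east_c \<eta> x * ((1 - q) * (\<Sum>\<zeta>\<in>east_states L. (if \<eta>(x := True) = \<zeta> then 1 else 0) * f \<zeta>)
          + q * (\<Sum>\<zeta>\<in>east_states L. (if \<eta>(x := False) = \<zeta> then 1 else 0) * f \<zeta>)
          - (\<Sum>\<zeta>\<in>east_states L. (if \<eta> = \<zeta> then 1 else 0) * f \<zeta>))"
      by (simp add: sum_distrib_left sum.distrib sum_subtractf algebra_simps)
    also have "\<dots> = east_c \<eta> x * ((1 - q) * f (\<eta>(x := True)) + q * f (\<eta>(x := False)) - f \<eta>)"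
      using upd_states[OF assms x] assms fin by (simp only: sum_ind_mult) simp
    finally show "(\<Sum>\<zeta>\<in>east_states L. east_c \<eta> x *
      ((1 - q) * ((if \<eta>(x := True) = \<zeta> then 1 else 0) * f \<zeta>) + q * ((if \<eta>(x := False) = \<zeta> then 1 else 0) * f \<zeta>)
        - (if \<eta> = \<zeta> then 1 else 0) * f \<zeta>)) = east_c \<eta> x * ((1 - q) * f (\<eta>(x := True)) + q * f (\<eta>(x := False)) - f \<eta>)" .
  qed
  finally show ?thesis unfolding east_gen_def by simp
qed

lemma gen_const: "east_gen q L (\<lambda>_. k) \<eta> = 0"
  by (simp add: east_gen_def algebra_simps)

lemma rate_rowsum: "\<eta> \<in> east_states L \<Longrightarrow> (\<Sum>\<zeta>\<in>east_states L. east_rate q L \<eta> \<zeta>) = 0"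
  using gen_sum[of \<eta> L q "\<lambda>_. 1"] gen_const[of q L 1 \<eta>] by simp

lemma rate_term_bounds:
  assumes "0 \<le> q" "q \<le> 1"
  shows "\<bar>east_c \<eta> x * ((1 - q) * (if a then 1 else 0) + q * (if b then 1 else 0) - (if d then 1 else 0))\<bar> \<le> (1::real)"
  using assms east_c_cases[of \<eta> x] by auto

lemma rate_abs_le:
  assumes "0 \<le> q" "q \<le> 1"
  shows "\<bar>east_rate q L \<eta> \<zeta>\<bar> \<le> real L"
proof -
  have "\<bar>east_rate q L \<eta> \<zeta>\<bar> \<le> (\<Sum>x\<in>{1..L}. (1::real))"
    unfolding east_rate_def2 by (rule order_trans[OF sum_abs sum_mono]) (rule rate_term_bounds[OF assms])
  then show ?thesis by simp
qed

lemma rate_offdiag_nonneg: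
  assumes "0 \<le> q" "q \<le> 1" "\<eta> \<noteq> \<zeta>"
  shows "0 \<le> east_rate q L \<eta> \<zeta>"
  unfolding east_rate_def2 using assms by (intro sum_nonneg) (simp add: east_c_nonneg)

lemma rate_diag_ge:
  assumes "0 \<le> q" "q \<le> 1"
  shows "- real L \<le> east_rate q L \<eta> \<eta>"
  using rate_abs_le[OF assms, of L \<eta> \<eta>] by linarith

lemma rate_flip_ge:
  assumes "0 \<le> q" "q \<le> 1" "x \<in> {1..L}" "\<eta>(x := b) \<noteq> \<eta>"
  shows "east_c \<eta> x * (if b then 1 - q else q) \<le> east_rate q L \<eta> (\<eta>(x := b))"
proof -
  let ?g = "\<lambda>y. east_c \<eta> y *
      ((1 - q) * (if \<eta>(y := True) = \<eta>(x := b) then 1 else 0) + q * (if \<eta>(y := False) = \<eta>(x := b) then 1 else 0)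
        - (if \<eta> = \<eta>(x := b) then 1 else 0))"
  have "?g x \<le> (\<Sum>y\<in>{1..L}. ?g y)"
    using assms by (intro member_le_sum) (auto intro!: mult_nonneg_nonneg east_c_nonneg)
  moreover have "?g x = east_c \<eta> x * (if b then 1 - q else q)"
  proof -
    have ne: "\<eta>(x := True) \<noteq> \<eta>(x := False)" "\<eta>(x := False) \<noteq> \<eta>(x := True)" by (metis fun_upd_same)+
    have ne2: "\<eta> \<noteq> \<eta>(x := b)" using assms(4) by metis
    show ?thesis using ne ne2 by (cases b) auto
  qed
  ultimately show ?thesis unfolding east_rate_def2 by simp
qed

definition proj :: "nat \<Rightarrow> (nat \<Rightarrow> bool) \<Rightarrow> (nat \<Rightarrow> bool)" where
  "proj L \<sigma> = (\<lambda>x. \<sigma> x \<and> x \<le> L)"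

lemma proj_states: "\<sigma> \<in> east_states L' \<Longrightarrow> proj L \<sigma> \<in> east_states L"
  by (auto simp: proj_def east_states_def)

lemma proj_id: "\<sigma> \<in> east_states L \<Longrightarrow> proj L \<sigma> = \<sigma>"
  by (auto simp: proj_def east_states_def fun_eq_iff)

lemma east_c_proj: "x \<le> L \<Longrightarrow> east_c (proj L \<eta>) x = east_c \<eta> x"
  by (auto simp: east_c_def proj_def)

lemma gen_proj:
  assumes "L \<le> L'"
  shows "east_gen q L' (\<lambda>\<zeta>. F (proj L \<zeta>)) \<eta> = east_gen q L F (proj L \<eta>)"
  unfolding east_gen_def
proof (rule sum.mono_neutral_cong_right)
  show "finite {1..L'}" by simp
  show "{1..L} \<subseteq> {1..L'}" using assms by auto
  show "\<forall>x\<in>{1..L'} - {1..L}. east_c \<eta> x * ((1 - q) * F (proj L (\<eta>(x := True))) + q * F (proj L (\<eta>(x := False))) -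
          F (proj L \<eta>)) = 0"
  proof
    fix x assume "x \<in> {1..L'} - {1..L}"
    then have "x > L" by auto
    then have "proj L (\<eta>(x := b)) = proj L \<eta>" for b by (auto simp: proj_def fun_eq_iff)
    then show "east_c \<eta> x * ((1 - q) * F (proj L (\<eta>(x := True))) + q * F (proj L (\<eta>(x := False))) -
          F (proj L \<eta>)) = 0" by (simp add: algebra_simps)
  qed
  fix x assume "x \<in> {1..L}"
  then have x: "x \<le> L" by auto
  then have "proj L (\<eta>(x := b)) = (proj L \<eta>)(x := b)" for b by (auto simp: proj_def fun_eq_iff)
  then show "east_c \<eta> x * ((1 - q) * F (proj L (\<eta>(x := True))) + q * F (proj L (\<eta>(x := False))) -
          F (proj L \<eta>)) = east_c (proj L \<eta>) x * ((1 - q) * F ((proj L \<eta>)(x := True)) + q * F ((proj L \<eta>)(x := False)) -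
          F (proj L \<eta>))" using east_c_proj[OF x] by simp
qed

lemma sum_split_site:
  assumes x: "x \<in> {1..L}"
  shows "(\<Sum>\<eta>\<in>east_states L. G \<eta>) = (\<Sum>\<eta>\<in>{\<eta>\<in>east_states L. \<not> \<eta> x}. G \<eta> + G (\<eta>(x := True)))"
proof -
  define A where "A = {\<eta>\<in>east_states L. \<not> \<eta> x}"
  have fA: "finite A" unfolding A_def using finite_states by simp
  have eq: "east_states L = A \<union> (\<lambda>\<eta>. \<eta>(x := True)) ` A"
  proof
    show "east_states L \<subseteq> A \<union> (\<lambda>\<eta>. \<eta>(x := True)) ` A"
    proof
      fix \<eta> assume h: "\<eta> \<in> east_states L"
      show "\<eta> \<in> A \<union> (\<lambda>\<eta>. \<eta>(x := True)) ` A"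
      proof (cases "\<eta> x")
        case True
        then have "\<eta> = (\<eta>(x := False))(x := True)" by (auto simp: fun_eq_iff)
        moreover have "\<eta>(x := False) \<in> A" using h updF_states by (auto simp: A_def)
        ultimately show ?thesis by blast
      next
        case False then show ?thesis using h by (auto simp: A_def)
      qed
    qed
    show "A \<union> (\<lambda>\<eta>. \<eta>(x := True)) ` A \<subseteq> east_states L"
      using upd_states[OF _ x] by (auto simp: A_def)
  qed
  have disj: "A \<inter> (\<lambda>\<eta>. \<eta>(x := True)) ` A = {}" by (auto simp: A_def)
  have inj: "inj_on (\<lambda>\<eta>. \<eta>(x := True)) A"
  proof (rule inj_onI)
    fix a b assume "a \<in> A" "b \<in> A" "a(x := True) = b(x := True)"
    then have na: "\<not> a x" "\<not> b x" and e: "a(x := True) = b(x := True)" by (auto simp: A_def)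
    show "a = b"
    proof
      fix y show "a y = b y"
      proof (cases "y = x")
        case True then show ?thesis using na by simp
      next
        case False then show ?thesis using fun_cong[OF e, of y] by simp
      qed
    qed
  qed
  have "(\<Sum>\<eta>\<in>east_states L. G \<eta>) = (\<Sum>\<eta>\<in>A. G \<eta>) + (\<Sum>\<eta>\<in>(\<lambda>\<eta>. \<eta>(x := True)) ` A. G \<eta>)"
    unfolding eq by (rule sum.union_disjoint) (use fA disj in auto)
  also have "(\<Sum>\<eta>\<in>(\<lambda>\<eta>. \<eta>(x := True)) ` A. G \<eta>) = (\<Sum>\<eta>\<in>A. G (\<eta>(x := True)))"
    by (rule sum.reindex_cong[OF inj refl refl])
  finally show ?thesis unfolding A_def by (simp add: sum.distrib)
qed

definition wq :: "real \<Rightarrow> bool \<Rightarrow> real" where "wq q b = (if b then 1 - q else q)"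

lemma east_pi_wq: "east_pi q L \<sigma> = (\<Prod>x\<in>{1..L}. wq q (\<sigma> x))"
  by (simp add: east_pi_def wq_def)

lemma pi_split:
  assumes "x \<in> {1..L}"
  shows "east_pi q L (\<eta>(x := b)) = (\<Prod>y\<in>{1..L} - {x}. wq q (\<eta> y)) * wq q b"
proof -
  have "east_pi q L (\<eta>(x := b)) = wq q b * (\<Prod>y\<in>{1..L} - {x}. wq q ((\<eta>(x := b)) y))"
    unfolding east_pi_wq using assms by (simp add: prod.remove)
  also have "(\<Prod>y\<in>{1..L} - {x}. wq q ((\<eta>(x := b)) y)) = (\<Prod>y\<in>{1..L} - {x}. wq q (\<eta> y))"
    by (intro prod.cong) auto
  finally show ?thesis by (simp only: mult.commute)
qed

lemma pi_Suc: "east_pi q (Suc L) \<sigma> = east_pi q L \<sigma> * wq q (\<sigma> (Suc L))"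
  unfolding east_pi_wq by (simp add: atLeastAtMostSuc_conv mult.commute)

lemma pi_upd_out: "y \<notin> {1..L} \<Longrightarrow> east_pi q L (\<sigma>(y := b)) = east_pi q L \<sigma>"
  unfolding east_pi_wq by (intro prod.cong) auto

lemma states_Suc_split: "{\<eta>\<in>east_states (Suc L). \<not> \<eta> (Suc L)} = east_states L"
  by (auto simp: east_states_def le_Suc_eq)

lemma sum_states_Suc:
  "(\<Sum>\<eta>\<in>east_states (Suc L). G \<eta>) = (\<Sum>\<eta>\<in>east_states L. G \<eta> + G (\<eta>(Suc L := True)))"
  using sum_split_site[of "Suc L" "Suc L" G] states_Suc_split[of L] by simp

lemma states_notin: "\<eta> \<in> east_states L \<Longrightarrow> x \<notin> {1..L} \<Longrightarrow> \<not> \<eta> x"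
  by (auto simp: east_states_def)

lemma pi_sum1: "(\<Sum>\<eta>\<in>east_states L. east_pi q L \<eta>) = 1"
proof (induction L)
  case 0
  have "east_states 0 = {\<lambda>_. False}" by (auto simp: east_states_def fun_eq_iff)
  then show ?case by (simp add: east_pi_def)
next
  case (Suc L)
  have "(\<Sum>\<eta>\<in>east_states (Suc L). east_pi q (Suc L) \<eta>) = (\<Sum>\<eta>\<in>east_states L. east_pi q L \<eta> * (wq q False + wq q True))"
    unfolding sum_states_Suc
  proof (intro sum.cong refl)
    fix \<eta> assume h: "\<eta> \<in> east_states L"
    have "\<not> \<eta> (Suc L)" using states_notin[OF h] by simp
    moreover have "east_pi q L (\<eta>(Suc L := True)) = east_pi q L \<eta>" by (rule pi_upd_out) simp
    ultimately show "east_pi q (Suc L) \<eta> + east_pi q (Suc L) (\<eta>(Suc L := True)) = east_pi q L \<eta> * (wq q False + wq q True)"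
      unfolding pi_Suc by (simp add: algebra_simps)
  qed
  also have "\<dots> = (\<Sum>\<eta>\<in>east_states L. east_pi q L \<eta>)" by (simp add: wq_def)
  also have "\<dots> = 1" by (rule Suc)
  finally show ?case .
qed

lemma pi_nonneg: "0 \<le> q \<Longrightarrow> q \<le> 1 \<Longrightarrow> 0 \<le> east_pi q L \<sigma>"
  unfolding east_pi_def by (intro prod_nonneg) auto

lemma pi_marg:
  assumes "L \<le> L'" "\<sigma> \<in> east_states L"
  shows "(\<Sum>\<sigma>'\<in>east_states L'. if proj L \<sigma>' = \<sigma> then east_pi q L' \<sigma>' else 0) = east_pi q L \<sigma>"
  using assms(1)
proof (induction L' rule: dec_induct)
  case base
  have "(\<Sum>\<sigma>'\<in>east_states L. if proj L \<sigma>' = \<sigma> then east_pi q L \<sigma>' else 0) = (\<Sum>\<sigma>'\<in>east_states L. if \<sigma>' = \<sigma> then east_pi q L \<sigma>' else 0)"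
    by (intro sum.cong refl) (simp add: proj_id)
  then show ?case using assms(2) finite_states by simp
next
  case (step n)
  have "(\<Sum>\<sigma>'\<in>east_states (Suc n). if proj L \<sigma>' = \<sigma> then east_pi q (Suc n) \<sigma>' else 0)
     = (\<Sum>\<sigma>'\<in>east_states n. (if proj L \<sigma>' = \<sigma> then east_pi q n \<sigma>' else 0) * (wq q False + wq q True))"
    unfolding sum_states_Suc
  proof (intro sum.cong refl)
    fix \<eta> assume h: "\<eta> \<in> east_states n"
    have "\<not> \<eta> (Suc n)" using states_notin[OF h] by simp
    moreover have "proj L (\<eta>(Suc n := True)) = proj L \<eta>" using step(1) by (auto simp: proj_def fun_eq_iff)
    moreover have "east_pi q n (\<eta>(Suc n := True)) = east_pi q n \<eta>" by (rule pi_upd_out) simp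
    ultimately show "(if proj L \<eta> = \<sigma> then east_pi q (Suc n) \<eta> else 0) + (if proj L (\<eta>(Suc n := True)) = \<sigma> then east_pi q (Suc n) (\<eta>(Suc n := True)) else 0)
       = (if proj L \<eta> = \<sigma> then east_pi q n \<eta> else 0) * (wq q False + wq q True)"
      unfolding pi_Suc by (simp add: algebra_simps)
  qed
  also have "\<dots> = (\<Sum>\<sigma>'\<in>east_states n. (if proj L \<sigma>' = \<sigma> then east_pi q n \<sigma>' else 0))" by (simp add: wq_def)
  also have "\<dots> = east_pi q L \<sigma>" by (rule step(3))
  finally show ?case .
qed

lemma pi_stationary:
  "(\<Sum>\<eta>\<in>east_states L. east_pi q L \<eta> * east_gen q L f \<eta>) = 0"
proof -
  have "(\<Sum>\<eta>\<in>east_states L. east_pi q L \<eta> * east_gen q L f \<eta>)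
    = (\<Sum>x\<in>{1..L}. \<Sum>\<eta>\<in>east_states L. east_pi q L \<eta> * (east_c \<eta> x *
      ((1 - q) * f (\<eta>(x := True)) + q * f (\<eta>(x := False)) - f \<eta>)))"
    unfolding east_gen_def sum_distrib_left by (rule sum.swap)
  also have "\<dots> = 0"
  proof (rule sum.neutral, rule ballI)
    fix x assume x: "x \<in> {1..L}"
    define G where "G \<eta> = east_pi q L \<eta> * (east_c \<eta> x *
      ((1 - q) * f (\<eta>(x := True)) + q * f (\<eta>(x := False)) - f \<eta>))" for \<eta>
    have "(\<Sum>\<eta>\<in>east_states L. G \<eta>) = 0"
      unfolding sum_split_site[OF x]
    proof (rule sum.neutral, rule ballI)
      fix \<eta> assume "\<eta> \<in> {\<eta> \<in> east_states L. \<not> \<eta> x}"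
      then have nx: "\<not> \<eta> x" by simp
      define p0 where "p0 = (\<Prod>y\<in>{1..L} - {x}. wq q (\<eta> y))"
      have e0: "\<eta>(x := False) = \<eta>" using nx by (simp add: fun_eq_iff)
      have pi0: "east_pi q L \<eta> = p0 * q" using pi_split[OF x, of q \<eta> False] e0 by (simp add: p0_def wq_def)
      have pi1: "east_pi q L (\<eta>(x := True)) = p0 * (1 - q)" using pi_split[OF x, of q \<eta> True] by (simp add: p0_def wq_def)
      have c1: "east_c (\<eta>(x := True)) x = east_c \<eta> x" using x by (auto simp: east_c_def)
      have e1: "(\<eta>(x := True))(x := False) = \<eta>" using e0 by simp
      have e2: "(\<eta>(x := True))(x := True) = \<eta>(x := True)" by simp
      show "G \<eta> + G (\<eta>(x := True)) = 0"
        unfolding G_def pi0 pi1 c1 e1 e2 e0 by (simp add: algebra_simps)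
    qed
    then show "(\<Sum>\<eta>\<in>east_states L. east_pi q L \<eta> * (east_c \<eta> x *
      ((1 - q) * f (\<eta>(x := True)) + q * f (\<eta>(x := False)) - f \<eta>))) = 0" unfolding G_def .
  qed
  finally show ?thesis .
qed

lemma mat_pow_lump:
  assumes fin: "finite S" "finite S'" and r: "r ` S' \<subseteq> S"
    and lump: "\<And>\<eta> F. \<eta> \<in> S' \<Longrightarrow> (\<Sum>\<zeta>\<in>S'. Q' \<eta> \<zeta> * F (r \<zeta>)) = (\<Sum>\<zeta>\<in>S. Q (r \<eta>) \<zeta> * F \<zeta>)"
    and eta: "\<eta> \<in> S'"
  shows "(\<Sum>\<sigma>'\<in>S'. if r \<sigma>' = \<sigma> then mat_pow S' Q' n \<eta> \<sigma>' else 0) = mat_pow S Q n (r \<eta>) \<sigma>"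
  using eta
proof (induction n arbitrary: \<eta>)
  case 0
  have "(\<Sum>\<sigma>'\<in>S'. if r \<sigma>' = \<sigma> then mat_pow S' Q' 0 \<eta> \<sigma>' else 0)
      = (\<Sum>\<sigma>'\<in>S'. if \<eta> = \<sigma>' then (if r \<eta> = \<sigma> then 1 else 0) else 0)"
    by (intro sum.cong refl) auto
  also have "\<dots> = (if r \<eta> = \<sigma> then 1 else 0)" using 0 fin by simp
  finally show ?case by simp
next
  case (Suc n)
  have "(\<Sum>\<sigma>'\<in>S'. if r \<sigma>' = \<sigma> then mat_pow S' Q' (Suc n) \<eta> \<sigma>' else 0)
      = (\<Sum>\<sigma>'\<in>S'. \<Sum>\<zeta>\<in>S'. Q' \<eta> \<zeta> * (if r \<sigma>' = \<sigma> then mat_pow S' Q' n \<zeta> \<sigma>' else 0))"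
    by (intro sum.cong refl) (simp add: sum_distrib_left)
  also have "\<dots> = (\<Sum>\<zeta>\<in>S'. \<Sum>\<sigma>'\<in>S'. Q' \<eta> \<zeta> * (if r \<sigma>' = \<sigma> then mat_pow S' Q' n \<zeta> \<sigma>' else 0))"
    by (rule sum.swap)
  also have "\<dots> = (\<Sum>\<zeta>\<in>S'. Q' \<eta> \<zeta> * mat_pow S Q n (r \<zeta>) \<sigma>)"
    by (intro sum.cong refl) (simp add: sum_distrib_left[symmetric] Suc.IH)
  also have "\<dots> = (\<Sum>\<zeta>\<in>S. Q (r \<eta>) \<zeta> * mat_pow S Q n \<zeta> \<sigma>)"
    by (rule lump[OF Suc.prems])
  finally show ?case by simp
qed

lemma mat_exp_lump:
  assumes fin: "finite S" "finite S'" and r: "r ` S' \<subseteq> S"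
    and lump: "\<And>\<eta> F. \<eta> \<in> S' \<Longrightarrow> (\<Sum>\<zeta>\<in>S'. Q' \<eta> \<zeta> * F (r \<zeta>)) = (\<Sum>\<zeta>\<in>S. Q (r \<eta>) \<zeta> * F \<zeta>)"
    and eta: "\<eta> \<in> S'" and B: "\<And>a b. \<bar>Q' a b\<bar> \<le> B"
  shows "(\<Sum>\<sigma>'\<in>S'. if r \<sigma>' = \<sigma> then mat_exp S' Q' t \<eta> \<sigma>' else 0) = mat_exp S Q t (r \<eta>) \<sigma>"
proof -
  have sm: "summable (\<lambda>n. if r \<sigma>' = \<sigma> then t ^ n / fact n * mat_pow S' Q' n \<eta> \<sigma>' else 0)" for \<sigma>'
    using mat_exp_summable[OF fin(2) B, where t=t and a=\<eta> and b=\<sigma>'] by (cases "r \<sigma>' = \<sigma>") simp_all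
  have "(\<Sum>\<sigma>'\<in>S'. if r \<sigma>' = \<sigma> then mat_exp S' Q' t \<eta> \<sigma>' else 0)
      = (\<Sum>\<sigma>'\<in>S'. \<Sum>n. if r \<sigma>' = \<sigma> then t ^ n / fact n * mat_pow S' Q' n \<eta> \<sigma>' else 0)"
    unfolding mat_exp_def by (intro sum.cong refl) auto
  also have "\<dots> = (\<Sum>n. \<Sum>\<sigma>'\<in>S'. if r \<sigma>' = \<sigma> then t ^ n / fact n * mat_pow S' Q' n \<eta> \<sigma>' else 0)"
    by (rule suminf_sum[symmetric]) (rule sm)
  also have "\<dots> = (\<Sum>n. t ^ n / fact n * mat_pow S Q n (r \<eta>) \<sigma>)"
  proof (intro suminf_cong)
    fix n
    have "(\<Sum>\<sigma>'\<in>S'. if r \<sigma>' = \<sigma> then t ^ n / fact n * mat_pow S' Q' n \<eta> \<sigma>' else 0)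
       = t ^ n / fact n * (\<Sum>\<sigma>'\<in>S'. if r \<sigma>' = \<sigma> then mat_pow S' Q' n \<eta> \<sigma>' else 0)"
      unfolding sum_distrib_left by (intro sum.cong refl) auto
    then show "(\<Sum>\<sigma>'\<in>S'. if r \<sigma>' = \<sigma> then t ^ n / fact n * mat_pow S' Q' n \<eta> \<sigma>' else 0)
       = t ^ n / fact n * mat_pow S Q n (r \<eta>) \<sigma>"
      using mat_pow_lump[OF fin r, of Q' Q, OF lump eta] by simp
  qed
  finally show ?thesis unfolding mat_exp_def .
qed

lemma east_lump:
  assumes "L \<le> L'" "\<eta> \<in> east_states L'"
  shows "(\<Sum>\<zeta>\<in>east_states L'. east_rate q L' \<eta> \<zeta> * F (proj L \<zeta>)) = (\<Sum>\<zeta>\<in>east_states L. east_rate q L (proj L \<eta>) \<zeta> * F \<zeta>)"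
  using gen_sum[OF assms(2), of q "\<lambda>\<zeta>. F (proj L \<zeta>)"] gen_proj[OF assms(1), of q F \<eta>]
    gen_sum[OF proj_states[OF assms(2), of L], of q F] by simp

lemma heat_marg:
  assumes "L \<le> L'" "\<eta> \<in> east_states L" "0 \<le> q" "q \<le> 1"
  shows "(\<Sum>\<sigma>'\<in>east_states L'. if proj L \<sigma>' = \<sigma> then east_heat q L' t \<eta> \<sigma>' else 0) = east_heat q L t \<eta> \<sigma>"
proof -
  have eta': "\<eta> \<in> east_states L'" using assms(1,2) states_mono by blast
  have "(\<Sum>\<sigma>'\<in>east_states L'. if proj L \<sigma>' = \<sigma> then east_heat q L' t \<eta> \<sigma>' else 0) = mat_exp (east_states L) (east_rate q L) t (proj L \<eta>) \<sigma>"
    unfolding east_heat_def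
  proof (rule mat_exp_lump[where B = "real L'"])
    show "proj L ` east_states L' \<subseteq> east_states L" by (auto intro: proj_states)
    show "\<bar>east_rate q L' a b\<bar> \<le> real L'" for a b by (rule rate_abs_le[OF assms(3,4)])
  qed (auto simp: finite_states eta' east_lump[OF assms(1)])
  then show ?thesis using proj_id[OF assms(2)] by (simp add: east_heat_def)
qed

lemma tv_mono:
  assumes "L \<le> L'" "\<eta> \<in> east_states L" "0 \<le> q" "q \<le> 1"
  shows "east_tv q L t \<eta> \<le> east_tv q L' t \<eta>"
proof -
  let ?S = "east_states L" and ?S' = "east_states L'"
  let ?d = "\<lambda>\<sigma>'. east_heat q L' t \<eta> \<sigma>' - east_pi q L' \<sigma>'"
  have img: "proj L ` ?S' \<subseteq> ?S" by (auto intro: proj_states)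
  have "(\<Sum>\<sigma>'\<in>?S'. \<bar>?d \<sigma>'\<bar>) = (\<Sum>\<sigma>\<in>?S. \<Sum>\<sigma>'\<in>{x\<in>?S'. proj L x = \<sigma>}. \<bar>?d \<sigma>'\<bar>)"
    by (rule sum.group[OF finite_states finite_states img, symmetric])
  also have "\<dots> \<ge> (\<Sum>\<sigma>\<in>?S. \<bar>\<Sum>\<sigma>'\<in>{x\<in>?S'. proj L x = \<sigma>}. ?d \<sigma>'\<bar>)"
    by (intro sum_mono sum_abs)
  also have "(\<Sum>\<sigma>\<in>?S. \<bar>\<Sum>\<sigma>'\<in>{x\<in>?S'. proj L x = \<sigma>}. ?d \<sigma>'\<bar>) = (\<Sum>\<sigma>\<in>?S. \<bar>east_heat q L t \<eta> \<sigma> - east_pi q L \<sigma>\<bar>)"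
  proof (intro sum.cong refl)
    fix \<sigma> assume s: "\<sigma> \<in> ?S"
    have "(\<Sum>\<sigma>'\<in>{x\<in>?S'. proj L x = \<sigma>}. ?d \<sigma>') = (\<Sum>\<sigma>'\<in>?S'. if proj L \<sigma>' = \<sigma> then ?d \<sigma>' else 0)"
      by (rule sum.inter_filter[OF finite_states])
    also have "\<dots> = (\<Sum>\<sigma>'\<in>?S'. if proj L \<sigma>' = \<sigma> then east_heat q L' t \<eta> \<sigma>' else 0)
        - (\<Sum>\<sigma>'\<in>?S'. if proj L \<sigma>' = \<sigma> then east_pi q L' \<sigma>' else 0)"
      by (simp add: sum_subtractf[symmetric] if_distrib cong: if_cong)
    also have "\<dots> = east_heat q L t \<eta> \<sigma> - east_pi q L \<sigma>"
      using heat_marg[OF assms] pi_marg[OF assms(1) s] by simp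
    finally show "\<bar>\<Sum>\<sigma>'\<in>{x\<in>?S'. proj L x = \<sigma>}. ?d \<sigma>'\<bar> = \<bar>east_heat q L t \<eta> \<sigma> - east_pi q L \<sigma>\<bar>" by simp
  qed
  finally show ?thesis unfolding east_tv_def by simp
qed

definition east_P :: "real \<Rightarrow> nat \<Rightarrow> (nat \<Rightarrow> bool) \<Rightarrow> (nat \<Rightarrow> bool) \<Rightarrow> real" where
  "east_P q L = (\<lambda>x y. (if x = y then 1 else 0) + east_rate q L x y / real (Suc L))"

locale qpar =
  fixes q :: real
  assumes q0: "0 < q" and q1: "q \<le> 1/2"
begin

lemma q0': "0 \<le> q" and q1': "q \<le> 1" and pq: "q \<le> 1 - q" using q0 q1 by auto

lemma P_nonneg: "0 \<le> east_P q L \<eta> \<zeta>"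
proof (cases "\<eta> = \<zeta>")
  case True
  have "- real L \<le> east_rate q L \<eta> \<eta>" by (rule rate_diag_ge[OF q0' q1'])
  then have "- 1 \<le> east_rate q L \<eta> \<eta> / real (Suc L)" by (simp add: field_simps)
  then show ?thesis using True by (simp add: east_P_def)
next
  case False
  then show ?thesis using rate_offdiag_nonneg[OF q0' q1' False] by (simp add: east_P_def)
qed

lemma P_diag_ge: "1 / real (Suc L) \<le> east_P q L \<eta> \<eta>"
proof -
  have "- real L \<le> east_rate q L \<eta> \<eta>" by (rule rate_diag_ge[OF q0' q1'])
  then show ?thesis by (simp add: east_P_def field_simps)
qed

lemma P_rowsum: "\<eta> \<in> east_states L \<Longrightarrow> (\<Sum>\<zeta>\<in>east_states L. east_P q L \<eta> \<zeta>) = 1"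
  using rate_rowsum[of \<eta> L q] finite_states[of L]
  by (simp add: east_P_def sum.distrib sum_divide_distrib[symmetric])

lemma P_flip:
  assumes "x \<in> {1..L}" "east_c \<eta> x = 1"
  shows "q / real (Suc L) \<le> east_P q L \<eta> (\<eta>(x := False))"
proof (cases "\<eta>(x := False) = \<eta>")
  case True
  have "q / real (Suc L) \<le> 1 / real (Suc L)" using q1' by (simp add: divide_right_mono)
  then show ?thesis using P_diag_ge[of L \<eta>] True by simp
next
  case False
  have "east_c \<eta> x * (if False then 1 - q else q) \<le> east_rate q L \<eta> (\<eta>(x := False))"
    by (rule rate_flip_ge[OF q0' q1' assms(1) False])
  then have "q \<le> east_rate q L \<eta> (\<eta>(x := False))" using assms(2) by simp
  then show ?thesis using False by (simp add: east_P_def divide_right_mono)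
qed

lemma P_flipT:
  assumes "x \<in> {1..L}" "east_c \<eta> x = 1" "\<eta>(x := True) \<noteq> \<eta>"
  shows "(1 - q) / real (Suc L) \<le> east_P q L \<eta> (\<eta>(x := True))"
proof -
  have "east_c \<eta> x * (if True then 1 - q else q) \<le> east_rate q L \<eta> (\<eta>(x := True))"
    by (rule rate_flip_ge[OF q0' q1' assms(1) assms(3)])
  then have "1 - q \<le> east_rate q L \<eta> (\<eta>(x := True))" using assms(2) by simp
  then show ?thesis using assms(3) by (simp add: east_P_def divide_right_mono)
qed

lemma P_stationary:
  assumes "\<sigma> \<in> east_states L"
  shows "(\<Sum>\<eta>\<in>east_states L. east_pi q L \<eta> * east_P q L \<eta> \<sigma>) = east_pi q L \<sigma>"
proof -
  have r: "east_rate q L \<eta> \<sigma> = east_gen q L (\<lambda>\<zeta>. if \<zeta> = \<sigma> then 1 else 0) \<eta>" for \<eta>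
    by (simp add: east_rate_def)
  have z: "(\<Sum>\<eta>\<in>east_states L. east_pi q L \<eta> * east_rate q L \<eta> \<sigma>) = 0"
    unfolding r by (rule pi_stationary)
  have "(\<Sum>\<eta>\<in>east_states L. east_pi q L \<eta> * east_P q L \<eta> \<sigma>)
     = (\<Sum>\<eta>\<in>east_states L. east_pi q L \<eta> * (if \<eta> = \<sigma> then 1 else 0))
       + (\<Sum>\<eta>\<in>east_states L. east_pi q L \<eta> * east_rate q L \<eta> \<sigma>) / real (Suc L)"
    by (simp add: east_P_def algebra_simps sum.distrib sum_divide_distrib)
  also have "\<dots> = east_pi q L \<sigma>" using z assms finite_states[of L] by simp
  finally show ?thesis .
qed

lemma Ppow_nonneg: "0 \<le> mat_pow (east_states L) (east_P q L) n \<eta> \<zeta>"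
  by (induction n arbitrary: \<eta>) (auto intro!: sum_nonneg mult_nonneg_nonneg P_nonneg)

lemma Ppow_rowsum: "\<eta> \<in> east_states L \<Longrightarrow> (\<Sum>\<zeta>\<in>east_states L. mat_pow (east_states L) (east_P q L) n \<eta> \<zeta>) = 1"
proof (induction n arbitrary: \<eta>)
  case 0 then show ?case using finite_states[of L] by simp
next
  case (Suc n)
  have "(\<Sum>\<zeta>\<in>east_states L. mat_pow (east_states L) (east_P q L) (Suc n) \<eta> \<zeta>)
    = (\<Sum>y\<in>east_states L. east_P q L \<eta> y * (\<Sum>\<zeta>\<in>east_states L. mat_pow (east_states L) (east_P q L) n y \<zeta>))"
  proof -
    have "(\<Sum>\<zeta>\<in>east_states L. mat_pow (east_states L) (east_P q L) (Suc n) \<eta> \<zeta>)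
      = (\<Sum>\<zeta>\<in>east_states L. \<Sum>y\<in>east_states L. east_P q L \<eta> y * mat_pow (east_states L) (east_P q L) n y \<zeta>)" by simp
    also have "\<dots> = (\<Sum>y\<in>east_states L. \<Sum>\<zeta>\<in>east_states L. east_P q L \<eta> y * mat_pow (east_states L) (east_P q L) n y \<zeta>)"
      by (rule sum.swap)
    finally show ?thesis by (simp add: sum_distrib_left)
  qed
  also have "\<dots> = (\<Sum>y\<in>east_states L. east_P q L \<eta> y)" using Suc.IH by simp
  finally show ?case using P_rowsum[OF Suc.prems] by simp
qed

lemma Ppow_le1: "\<eta> \<in> east_states L \<Longrightarrow> \<zeta> \<in> east_states L \<Longrightarrow> mat_pow (east_states L) (east_P q L) n \<eta> \<zeta> \<le> 1"
  using member_le_sum[of \<zeta> "east_states L" "mat_pow (east_states L) (east_P q L) n \<eta>"]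
    Ppow_rowsum[of \<eta> L n] Ppow_nonneg finite_states by auto

lemma Ppow_stationary:
  assumes "\<sigma> \<in> east_states L"
  shows "(\<Sum>\<eta>\<in>east_states L. east_pi q L \<eta> * mat_pow (east_states L) (east_P q L) n \<eta> \<sigma>) = east_pi q L \<sigma>"
  using assms
proof (induction n arbitrary: \<sigma>)
  case 0 then show ?case using finite_states[of L] by (simp add: mult.commute)
next
  case (Suc n)
  let ?S = "east_states L" and ?P = "east_P q L"
  have "(\<Sum>\<eta>\<in>?S. east_pi q L \<eta> * mat_pow ?S ?P (Suc n) \<eta> \<sigma>)
     = (\<Sum>\<eta>\<in>?S. east_pi q L \<eta> * (\<Sum>z\<in>?S. mat_pow ?S ?P n \<eta> z * ?P z \<sigma>))"
    using mat_pow_Suc_right[OF finite_states _ Suc.prems] by (intro sum.cong refl) (simp del: mat_pow.simps)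
  also have "\<dots> = (\<Sum>\<eta>\<in>?S. \<Sum>z\<in>?S. east_pi q L \<eta> * mat_pow ?S ?P n \<eta> z * ?P z \<sigma>)"
    by (simp add: sum_distrib_left mult.assoc)
  also have "\<dots> = (\<Sum>z\<in>?S. \<Sum>\<eta>\<in>?S. east_pi q L \<eta> * mat_pow ?S ?P n \<eta> z * ?P z \<sigma>)"
    by (rule sum.swap)
  also have "\<dots> = (\<Sum>z\<in>?S. (\<Sum>\<eta>\<in>?S. east_pi q L \<eta> * mat_pow ?S ?P n \<eta> z) * ?P z \<sigma>)"
    by (simp add: sum_distrib_right)
  also have "\<dots> = (\<Sum>z\<in>?S. east_pi q L z * ?P z \<sigma>)" using Suc.IH by simp
  also have "\<dots> = east_pi q L \<sigma>" by (rule P_stationary[OF Suc.prems])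
  finally show ?case .
qed

end

lemma contract:
  fixes K :: "'a \<Rightarrow> 'a \<Rightarrow> real"
  assumes fin: "finite S" and s0: "s0 \<in> S"
    and Kn: "\<And>z s. z \<in> S \<Longrightarrow> s \<in> S \<Longrightarrow> 0 \<le> K z s"
    and Kr: "\<And>z. z \<in> S \<Longrightarrow> (\<Sum>s\<in>S. K z s) = 1"
    and Kd: "\<And>z. z \<in> S \<Longrightarrow> \<delta> \<le> K z s0"
    and v: "(\<Sum>z\<in>S. v z) = 0"
  shows "(\<Sum>s\<in>S. \<bar>\<Sum>z\<in>S. v z * K z s\<bar>) \<le> (1 - \<delta>) * (\<Sum>z\<in>S. \<bar>v z\<bar>)"
proof -
  define K' where "K' z s = K z s - (if s = s0 then \<delta> else 0)" for z s
  have K'n: "z \<in> S \<Longrightarrow> s \<in> S \<Longrightarrow> 0 \<le> K' z s" for z s using Kn Kd by (auto simp: K'_def)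
  have K'r: "z \<in> S \<Longrightarrow> (\<Sum>s\<in>S. K' z s) = 1 - \<delta>" for z
    using Kr fin s0 by (simp add: K'_def sum_subtractf)
  have eq: "(\<Sum>z\<in>S. v z * K z s) = (\<Sum>z\<in>S. v z * K' z s)" for s
  proof -
    have "(\<Sum>z\<in>S. v z * K z s) = (\<Sum>z\<in>S. v z * K' z s + (if s = s0 then \<delta> else 0) * v z)"
      by (intro sum.cong refl) (simp add: K'_def algebra_simps)
    also have "\<dots> = (\<Sum>z\<in>S. v z * K' z s) + (if s = s0 then \<delta> else 0) * (\<Sum>z\<in>S. v z)"
      by (simp add: sum.distrib sum_distrib_left)
    finally have "(\<Sum>z\<in>S. v z * K z s) = (\<Sum>z\<in>S. v z * K' z s) + (if s = s0 then \<delta> else 0) * (\<Sum>z\<in>S. v z)" .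
    then show ?thesis using v by simp
  qed
  have "(\<Sum>s\<in>S. \<bar>\<Sum>z\<in>S. v z * K z s\<bar>) \<le> (\<Sum>s\<in>S. \<Sum>z\<in>S. \<bar>v z\<bar> * K' z s)"
    unfolding eq
  proof (rule sum_mono)
    fix s assume s: "s \<in> S"
    have "\<bar>\<Sum>z\<in>S. v z * K' z s\<bar> \<le> (\<Sum>z\<in>S. \<bar>v z * K' z s\<bar>)" by (rule sum_abs)
    also have "\<dots> = (\<Sum>z\<in>S. \<bar>v z\<bar> * K' z s)" using K'n s by (intro sum.cong refl) (simp add: abs_mult)
    finally show "\<bar>\<Sum>z\<in>S. v z * K' z s\<bar> \<le> (\<Sum>z\<in>S. \<bar>v z\<bar> * K' z s)" .
  qed
  also have "\<dots> = (\<Sum>z\<in>S. \<Sum>s\<in>S. \<bar>v z\<bar> * K' z s)" by (rule sum.swap)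
  also have "\<dots> = (\<Sum>z\<in>S. \<bar>v z\<bar> * (1 - \<delta>))" by (intro sum.cong refl) (simp add: sum_distrib_left[symmetric] K'r)
  finally show ?thesis by (simp add: sum_distrib_left mult.commute)
qed

context qpar begin

definition zero_st :: "nat \<Rightarrow> bool" where "zero_st = (\<lambda>_. False)"

lemma zero_states: "zero_st \<in> east_states L" by (simp add: zero_st_def east_states_def)

lemma step_choice:
  assumes L: "1 \<le> L" and h: "\<eta> \<in> east_states L" and cl: "\<forall>y. y \<le> j \<longrightarrow> \<not> \<eta> y"
  defines "x \<equiv> min (Suc j) L"
  shows "x \<in> {1..L}" "east_c \<eta> x = 1" "\<forall>y. y \<le> Suc j \<longrightarrow> \<not> (\<eta>(x := False)) y"
proof -
  show "x \<in> {1..L}" using L by (simp add: x_def)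
  show "east_c \<eta> x = 1"
  proof (cases "x = 1")
    case False
    then have "x - 1 \<le> j" by (simp add: x_def)
    then show ?thesis using cl False by (simp add: east_c_def)
  qed (simp add: east_c_def)
  show "\<forall>y. y \<le> Suc j \<longrightarrow> \<not> (\<eta>(x := False)) y"
  proof (intro allI impI)
    fix y assume y: "y \<le> Suc j"
    show "\<not> (\<eta>(x := False)) y"
    proof (cases "y = x")
      case False
      show ?thesis
      proof (cases "y \<le> j")
        case True then show ?thesis using cl False by simp
      next
        case nj: False
        then have "y = Suc j" using y by simp
        then have "y > L" using False by (simp add: x_def min_def split: if_splits)
        then show ?thesis using h False by (auto simp: east_states_def)
      qed
    qed simp
  qed
qed

lemma doeblin_aux:
  assumes L: "1 \<le> L"
  shows "\<forall>\<eta>\<in>east_states L. \<forall>j. (\<forall>y. y \<le> j \<longrightarrow> \<not> \<eta> y) \<longrightarrow> L \<le> j + n \<longrightarrow>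
     (q / real (Suc L)) ^ n \<le> mat_pow (east_states L) (east_P q L) n \<eta> zero_st"
proof (induction n)
  case 0
  show ?case
  proof (intro ballI allI impI)
    fix \<eta> j assume h: "\<eta> \<in> east_states L" and cl: "\<forall>y. y \<le> j \<longrightarrow> \<not> \<eta> y" and "L \<le> j + 0"
    then have "\<eta> = zero_st" by (auto simp: zero_st_def east_states_def fun_eq_iff)
    then show "(q / real (Suc L)) ^ 0 \<le> mat_pow (east_states L) (east_P q L) 0 \<eta> zero_st" by simp
  qed
next
  case (Suc n)
  show ?case
  proof (intro ballI allI impI)
    fix \<eta> j assume h: "\<eta> \<in> east_states L" and cl: "\<forall>y. y \<le> j \<longrightarrow> \<not> \<eta> y" and lj: "L \<le> j + Suc n"
    define x where "x = min (Suc j) L"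
    note sc = step_choice[OF L h cl, folded x_def]
    have h': "\<eta>(x := False) \<in> east_states L" by (rule updF_states[OF h])
    have ih: "(q / real (Suc L)) ^ n \<le> mat_pow (east_states L) (east_P q L) n (\<eta>(x := False)) zero_st"
      using Suc.IH h' sc(3) lj by auto
    have "east_P q L \<eta> (\<eta>(x := False)) * mat_pow (east_states L) (east_P q L) n (\<eta>(x := False)) zero_st
       \<le> (\<Sum>\<zeta>\<in>east_states L. east_P q L \<eta> \<zeta> * mat_pow (east_states L) (east_P q L) n \<zeta> zero_st)"
      by (rule member_le_sum[OF h']) (auto intro!: mult_nonneg_nonneg P_nonneg Ppow_nonneg simp: finite_states)
    moreover have "q / real (Suc L) * (q / real (Suc L)) ^ n \<le> east_P q L \<eta> (\<eta>(x := False)) * mat_pow (east_states L) (east_P q L) n (\<eta>(x := False)) zero_st"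
      by (intro mult_mono P_flip sc ih) (auto intro: P_nonneg simp: q0')
    ultimately show "(q / real (Suc L)) ^ Suc n \<le> mat_pow (east_states L) (east_P q L) (Suc n) \<eta> zero_st" by simp
  qed
qed

lemma doeblin:
  assumes "1 \<le> L" "\<eta> \<in> east_states L"
  shows "(q / real (Suc L)) ^ L \<le> mat_pow (east_states L) (east_P q L) L \<eta> zero_st"
  using doeblin_aux[OF assms(1), of L] assms(2) by (auto simp: east_states_def)

definition Dn :: "nat \<Rightarrow> nat \<Rightarrow> (nat \<Rightarrow> bool) \<Rightarrow> real" where
  "Dn L n \<eta> = (\<Sum>\<sigma>\<in>east_states L. \<bar>mat_pow (east_states L) (east_P q L) n \<eta> \<sigma> - east_pi q L \<sigma>\<bar>)"

lemma Dn_le2: "\<eta> \<in> east_states L \<Longrightarrow> Dn L n \<eta> \<le> 2"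
proof -
  assume h: "\<eta> \<in> east_states L"
  have "Dn L n \<eta> \<le> (\<Sum>\<sigma>\<in>east_states L. mat_pow (east_states L) (east_P q L) n \<eta> \<sigma> + east_pi q L \<sigma>)"
    unfolding Dn_def by (intro sum_mono) (use Ppow_nonneg pi_nonneg[OF q0' q1'] in \<open>auto simp: abs_le_iff\<close>)
  also have "\<dots> = 2" using Ppow_rowsum[OF h] pi_sum1 by (simp add: sum.distrib)
  finally show ?thesis .
qed

lemma Dn_contract:
  assumes L: "1 \<le> L" and h: "\<eta> \<in> east_states L"
  shows "Dn L (n + L) \<eta> \<le> (1 - (q / real (Suc L)) ^ L) * Dn L n \<eta>"
proof -
  let ?S = "east_states L" and ?P = "east_P q L"
  define v where "v z = mat_pow ?S ?P n \<eta> z - east_pi q L z" for z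
  have eq: "mat_pow ?S ?P (n + L) \<eta> \<sigma> - east_pi q L \<sigma> = (\<Sum>z\<in>?S. v z * mat_pow ?S ?P L z \<sigma>)" if s: "\<sigma> \<in> ?S" for \<sigma>
  proof -
    have "mat_pow ?S ?P (n + L) \<eta> \<sigma> = (\<Sum>z\<in>?S. mat_pow ?S ?P n \<eta> z * mat_pow ?S ?P L z \<sigma>)"
      by (rule mat_pow_add[OF finite_states h])
    moreover have "east_pi q L \<sigma> = (\<Sum>z\<in>?S. east_pi q L z * mat_pow ?S ?P L z \<sigma>)"
      using Ppow_stationary[OF s, of L] by simp
    ultimately show ?thesis by (simp add: v_def left_diff_distrib sum_subtractf)
  qed
  have "Dn L (n + L) \<eta> = (\<Sum>\<sigma>\<in>?S. \<bar>\<Sum>z\<in>?S. v z * mat_pow ?S ?P L z \<sigma>\<bar>)"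
    unfolding Dn_def using eq by (intro sum.cong refl) simp
  also have "\<dots> \<le> (1 - (q / real (Suc L)) ^ L) * (\<Sum>z\<in>?S. \<bar>v z\<bar>)"
  proof (rule contract[OF finite_states zero_states])
    show "(\<Sum>z\<in>?S. v z) = 0" using Ppow_rowsum[OF h] pi_sum1 by (simp add: v_def sum_subtractf)
    show "\<And>z. z \<in> ?S \<Longrightarrow> (q / real (Suc L)) ^ L \<le> mat_pow ?S ?P L z zero_st" by (rule doeblin[OF L])
  qed (auto intro: Ppow_nonneg Ppow_rowsum)
  finally show ?thesis unfolding Dn_def v_def .
qed

lemma Dn_bound:
  assumes L: "1 \<le> L" and h: "\<eta> \<in> east_states L"
  shows "Dn L n \<eta> \<le> 2 * (1 - (q / real (Suc L)) ^ L) ^ (n div L)"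
proof (induction n rule: less_induct)
  case (less n)
  define \<theta> where "\<theta> = 1 - (q / real (Suc L)) ^ L"
  have th0: "0 \<le> \<theta>"
  proof -
    have "q / real (Suc L) \<le> 1" using q1' by (simp add: divide_le_eq)
    then have "(q / real (Suc L)) ^ L \<le> 1" using q0' by (simp add: power_le_one)
    then show ?thesis by (simp add: \<theta>_def)
  qed
  show ?case
  proof (cases "n < L")
    case True then show ?thesis using Dn_le2[OF h] by simp
  next
    case False
    then obtain m where m: "n = m + L" by (metis add.commute le_add_diff_inverse not_less)
    have "Dn L n \<eta> \<le> \<theta> * Dn L m \<eta>" unfolding m \<theta>_def by (rule Dn_contract[OF L h])
    also have "\<dots> \<le> \<theta> * (2 * \<theta> ^ (m div L))"
      using less.IH[of m] m L th0 by (intro mult_left_mono) (auto simp: \<theta>_def)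
    also have "\<dots> = 2 * \<theta> ^ (n div L)" using L by (simp add: m)
    finally show ?thesis by (simp add: \<theta>_def)
  qed
qed

end

lemma theta_pow_bound:
  fixes \<theta> :: real
  assumes th: "0 < \<theta>" "\<theta> \<le> 1" and L: "1 \<le> L"
  shows "\<theta> ^ (n div L) \<le> (\<theta> powr (1 / real L)) ^ n / \<theta>"
proof -
  have nl: "real n / real L - 1 \<le> real (n div L)"
  proof -
    have e: "n div L * L + n mod L = n" by (rule div_mult_mod_eq)
    have "n mod L < L" using L by simp
    then have "n < n div L * L + L" using e by linarith
    then have "n < (n div L + 1) * L" by (simp add: algebra_simps)
    then have "real n < real ((n div L + 1) * L)" by (simp only: of_nat_less_iff)
    then have "real n < (real (n div L) + 1) * real L" by (simp add: algebra_simps)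
    then show ?thesis using L by (simp add: field_simps)
  qed
  have "\<theta> ^ (n div L) = \<theta> powr real (n div L)" using th by (simp add: powr_realpow)
  also have "\<dots> \<le> \<theta> powr (real n / real L - 1)" by (rule powr_mono'[OF nl]) (use th in auto)
  also have "\<dots> = (\<theta> powr (1 / real L)) ^ n / \<theta>"
    using th by (simp add: powr_diff powr_powr powr_realpow[symmetric] mult.commute)
  finally show ?thesis .
qed

context qpar begin

lemma heat_unif:
  assumes "\<eta> \<in> east_states L"
  shows "east_heat q L t \<eta> \<sigma> = exp (- (real (Suc L) * t)) *
     (\<Sum>n. (real (Suc L) * t) ^ n / fact n * mat_pow (east_states L) (east_P q L) n \<eta> \<sigma>)"
  unfolding east_heat_def east_P_def
  by (rule mat_exp_unif[OF finite_states assms _ rate_abs_le[OF q0' q1']]) simp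

lemma tv_bound:
  assumes L: "1 \<le> L" and h: "\<eta> \<in> east_states L" and t: "0 \<le> t"
  shows "east_tv q L t \<eta> \<le> exp (- (real (Suc L) * t)) *
     (\<Sum>n. (real (Suc L) * t) ^ n / fact n * (1 - (q / real (Suc L)) ^ L) ^ (n div L))"
proof -
  let ?S = "east_states L" and ?P = "east_P q L"
  define c where "c = real (Suc L)"
  define w where "w n = (c * t) ^ n / fact n" for n
  define \<theta> where "\<theta> = 1 - (q / real (Suc L)) ^ L"
  define d where "d n \<sigma> = mat_pow ?S ?P n \<eta> \<sigma> - east_pi q L \<sigma>" for n \<sigma>
  have w0: "0 \<le> w n" for n using t by (simp add: w_def c_def)
  have ws: "summable w" unfolding w_def using exp_sums_real by (rule sums_summable)
  have we: "(\<Sum>n. w n) = exp (c * t)" unfolding w_def using exp_sums_real by (rule sums_unique[symmetric])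
  have dabs: "\<bar>d n \<sigma>\<bar> \<le> 1" if s: "\<sigma> \<in> ?S" for n \<sigma>
  proof -
    have a: "mat_pow ?S ?P n \<eta> \<sigma> \<le> 1" "0 \<le> mat_pow ?S ?P n \<eta> \<sigma>" using Ppow_le1[OF h s] Ppow_nonneg by auto
    have b0: "0 \<le> east_pi q L \<sigma>" using pi_nonneg[OF q0' q1'] by auto
    have "east_pi q L \<sigma> \<le> (\<Sum>x\<in>?S. east_pi q L x)"
      by (rule member_le_sum[OF s]) (use pi_nonneg[OF q0' q1'] finite_states in auto)
    then have b1: "east_pi q L \<sigma> \<le> 1" using pi_sum1[of q L] by simp
    show ?thesis unfolding d_def using a b0 b1 by (simp add: abs_le_iff)
  qed
  have th0: "0 \<le> \<theta>" "\<theta> \<le> 1"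
  proof -
    have "q / real (Suc L) \<le> 1" using q1' by (simp add: divide_le_eq)
    then have "(q / real (Suc L)) ^ L \<le> 1" using q0' by (simp add: power_le_one)
    then show "0 \<le> \<theta>" by (simp add: \<theta>_def)
    show "\<theta> \<le> 1" using q0' by (simp add: \<theta>_def)
  qed
  have sP: "summable (\<lambda>n. w n * mat_pow ?S ?P n \<eta> \<sigma>)" if s: "\<sigma> \<in> ?S" for \<sigma>
    by (rule summable_comparison_test'[OF ws]) (use w0 Ppow_le1[OF h s] Ppow_nonneg in \<open>auto simp: abs_mult intro: mult_left_le\<close>)
  have sPi: "summable (\<lambda>n. w n * east_pi q L \<sigma>)" for \<sigma> using ws by (rule summable_mult2)
  have sd: "summable (\<lambda>n. \<bar>w n * d n \<sigma>\<bar>)" if s: "\<sigma> \<in> ?S" for \<sigma>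
    by (rule summable_comparison_test'[OF ws]) (use w0 dabs[OF s] in \<open>auto simp: abs_mult intro: mult_left_le\<close>)
  have A: "east_heat q L t \<eta> \<sigma> - east_pi q L \<sigma> = exp (- (c * t)) * (\<Sum>n. w n * d n \<sigma>)" if s: "\<sigma> \<in> ?S" for \<sigma>
  proof -
    define Y where "Y = (\<Sum>n. w n * east_pi q L \<sigma>)"
    define X where "X = (\<Sum>n. w n * mat_pow ?S ?P n \<eta> \<sigma>)"
    have "east_pi q L \<sigma> = exp (- (c * t)) * ((\<Sum>n. w n) * east_pi q L \<sigma>)"
      unfolding we by (simp add: exp_minus field_simps)
    also have "(\<Sum>n. w n) * east_pi q L \<sigma> = Y" unfolding Y_def by (rule suminf_mult2[OF ws])
    finally have p: "east_pi q L \<sigma> = exp (- (c * t)) * Y" .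
    have hh: "east_heat q L t \<eta> \<sigma> = exp (- (c * t)) * X"
      unfolding heat_unif[OF h] w_def c_def X_def ..
    have "X - Y = (\<Sum>n. w n * mat_pow ?S ?P n \<eta> \<sigma> - w n * east_pi q L \<sigma>)"
      unfolding X_def Y_def by (rule suminf_diff[OF sP[OF s] sPi])
    also have "\<dots> = (\<Sum>n. w n * d n \<sigma>)" by (simp add: d_def algebra_simps)
    finally have eq: "X - Y = (\<Sum>n. w n * d n \<sigma>)" .
    show ?thesis unfolding hh p eq[symmetric] by (simp add: right_diff_distrib)
  qed
  have B: "\<bar>east_heat q L t \<eta> \<sigma> - east_pi q L \<sigma>\<bar> \<le> exp (- (c * t)) * (\<Sum>n. w n * \<bar>d n \<sigma>\<bar>)" if s: "\<sigma> \<in> ?S" for \<sigma>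
  proof -
    have "\<bar>\<Sum>n. w n * d n \<sigma>\<bar> \<le> (\<Sum>n. \<bar>w n * d n \<sigma>\<bar>)" by (rule summable_rabs[OF sd[OF s]])
    also have "\<dots> = (\<Sum>n. w n * \<bar>d n \<sigma>\<bar>)" using w0 by (simp add: abs_mult)
    finally show ?thesis unfolding A[OF s] by (simp add: abs_mult)
  qed
  have sd2: "summable (\<lambda>n. w n * \<bar>d n \<sigma>\<bar>)" if s: "\<sigma> \<in> ?S" for \<sigma>
    using sd[OF s] w0 by (simp add: abs_mult)
  have C: "(\<Sum>\<sigma>\<in>?S. (\<Sum>n. w n * \<bar>d n \<sigma>\<bar>)) = (\<Sum>n. w n * Dn L n \<eta>)"
  proof -
    have "(\<Sum>\<sigma>\<in>?S. (\<Sum>n. w n * \<bar>d n \<sigma>\<bar>)) = (\<Sum>n. \<Sum>\<sigma>\<in>?S. w n * \<bar>d n \<sigma>\<bar>)"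
      by (rule suminf_sum[symmetric]) (rule sd2)
    also have "\<dots> = (\<Sum>n. w n * Dn L n \<eta>)" by (simp add: Dn_def d_def sum_distrib_left)
    finally show ?thesis .
  qed
  have sDn: "summable (\<lambda>n. w n * Dn L n \<eta>)"
  proof (rule summable_comparison_test'[OF summable_mult[OF ws, of 2]])
    fix n
    have "0 \<le> Dn L n \<eta>" unfolding Dn_def by (intro sum_nonneg) auto
    then have "norm (w n * Dn L n \<eta>) = w n * Dn L n \<eta>" using w0 by (simp add: abs_mult)
    also have "\<dots> \<le> w n * 2" by (rule mult_left_mono[OF Dn_le2[OF h] w0])
    finally show "norm (w n * Dn L n \<eta>) \<le> 2 * w n" by simp
  qed
  have sTh: "summable (\<lambda>n. w n * (2 * \<theta> ^ (n div L)))"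
    by (rule summable_comparison_test'[OF summable_mult[OF ws, of 2]])
       (use w0 th0 in \<open>auto simp: abs_mult intro!: mult_left_le power_le_one\<close>)
  have D: "(\<Sum>n. w n * Dn L n \<eta>) \<le> (\<Sum>n. w n * (2 * \<theta> ^ (n div L)))"
    by (rule suminf_le[OF _ sDn sTh]) (use w0 Dn_bound[OF L h] in \<open>auto simp: \<theta>_def intro: mult_left_mono\<close>)
  have "east_tv q L t \<eta> \<le> 1/2 * (\<Sum>\<sigma>\<in>?S. exp (- (c * t)) * (\<Sum>n. w n * \<bar>d n \<sigma>\<bar>))"
    unfolding east_tv_def by (intro mult_left_mono sum_mono B) auto
  also have "\<dots> = 1/2 * exp (- (c * t)) * (\<Sum>n. w n * Dn L n \<eta>)"
    by (simp add: sum_distrib_left[symmetric] C)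
  also have "\<dots> \<le> 1/2 * exp (- (c * t)) * (\<Sum>n. w n * (2 * \<theta> ^ (n div L)))"
    by (intro mult_left_mono D) auto
  also have "(\<Sum>n. w n * (2 * \<theta> ^ (n div L))) = 2 * (\<Sum>n. w n * \<theta> ^ (n div L))"
  proof -
    have "summable (\<lambda>n. w n * \<theta> ^ (n div L))"
      using summable_mult[OF sTh, of "1/2"] by simp
    then show ?thesis using suminf_mult[of "\<lambda>n. w n * \<theta> ^ (n div L)" 2] by (simp add: algebra_simps)
  qed
  finally show ?thesis by (simp add: w_def c_def \<theta>_def)
qed

end

context qpar begin

lemma mixing_exists:
  assumes L: "1 \<le> L"
  shows "\<exists>t0\<ge>1. \<forall>\<eta>\<in>east_states L. east_tv q L t0 \<eta> \<le> 1/4"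
proof -
  define c where "c = real (Suc L)"
  define \<theta> where "\<theta> = 1 - (q / real (Suc L)) ^ L"
  define \<rho> where "\<rho> = \<theta> powr (1 / real L)"
  have c0: "c > 0" by (simp add: c_def)
  have qc: "0 < q / real (Suc L)" "q / real (Suc L) < 1" using q0 q1 by (auto simp: divide_less_eq)
  have th: "0 < \<theta>" "\<theta> < 1"
  proof -
    have "(q / real (Suc L)) ^ L \<le> (q / real (Suc L)) ^ 1"
      by (rule power_decreasing) (use L qc in auto)
    then have "(q / real (Suc L)) ^ L \<le> q / real (Suc L)" by (simp only: power_one_right)
    then show "0 < \<theta>" using qc unfolding \<theta>_def by linarith
    show "\<theta> < 1" using qc by (simp add: \<theta>_def)
  qed
  have rho: "0 < \<rho>" "\<rho> < 1"
  proof -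
    show "0 < \<rho>" using th by (simp add: \<rho>_def)
    have "\<theta> powr (1 / real L) < 1 powr (1 / real L)"
      by (rule powr_less_mono2) (use th L in auto)
    then show "\<rho> < 1" by (simp add: \<rho>_def)
  qed
  have bound: "east_tv q L t \<eta> \<le> exp (- (c * t * (1 - \<rho>))) / \<theta>" if t: "0 \<le> t" and h: "\<eta> \<in> east_states L" for t \<eta>
  proof -
    define w where "w n = (c * t) ^ n / fact n" for n
    have w0: "0 \<le> w n" for n using t c0 by (simp add: w_def)
    have ws: "summable w" unfolding w_def using exp_sums_real by (rule sums_summable)
    have s2: "(\<lambda>n. (c * t * \<rho>) ^ n / fact n / \<theta>) sums (exp (c * t * \<rho>) / \<theta>)"
      using sums_divide[OF exp_sums_real, of "c * t * \<rho>" \<theta>] .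
    have e2: "w n * (\<rho> ^ n / \<theta>) = (c * t * \<rho>) ^ n / fact n / \<theta>" for n
      by (simp add: w_def power_mult_distrib)
    have s1: "summable (\<lambda>n. w n * \<theta> ^ (n div L))"
      by (rule summable_comparison_test'[OF ws]) (use w0 th in \<open>auto simp: abs_mult intro!: mult_left_le power_le_one\<close>)
    have "(\<Sum>n. w n * \<theta> ^ (n div L)) \<le> (\<Sum>n. (c * t * \<rho>) ^ n / fact n / \<theta>)"
    proof (rule suminf_le[OF _ s1 sums_summable[OF s2]])
      fix n
      have "\<theta> ^ (n div L) \<le> \<rho> ^ n / \<theta>" unfolding \<rho>_def by (rule theta_pow_bound) (use th L in auto)
      then have "w n * \<theta> ^ (n div L) \<le> w n * (\<rho> ^ n / \<theta>)" by (rule mult_left_mono[OF _ w0])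
      then show "w n * \<theta> ^ (n div L) \<le> (c * t * \<rho>) ^ n / fact n / \<theta>" unfolding e2 .
    qed
    also have "\<dots> = exp (c * t * \<rho>) / \<theta>" using s2 by (rule sums_unique[symmetric])
    finally have S: "(\<Sum>n. w n * \<theta> ^ (n div L)) \<le> exp (c * t * \<rho>) / \<theta>" .
    have "east_tv q L t \<eta> \<le> exp (- (c * t)) * (\<Sum>n. w n * \<theta> ^ (n div L))"
      using tv_bound[OF L h t] unfolding w_def c_def \<theta>_def .
    also have "\<dots> \<le> exp (- (c * t)) * (exp (c * t * \<rho>) / \<theta>)" by (intro mult_left_mono S) auto
    also have "\<dots> = exp (- (c * t * (1 - \<rho>))) / \<theta>"
      by (simp add: exp_add[symmetric] algebra_simps)
    finally show ?thesis .
  qed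
  define t0 where "t0 = max 1 (ln (4 / \<theta>) / (c * (1 - \<rho>)))"
  have t01: "1 \<le> t0" by (simp add: t0_def)
  have "ln (4 / \<theta>) \<le> c * t0 * (1 - \<rho>)"
  proof -
    have "ln (4 / \<theta>) / (c * (1 - \<rho>)) \<le> t0" by (simp add: t0_def)
    then show ?thesis using c0 rho by (simp add: divide_le_eq algebra_simps)
  qed
  then have "exp (- (c * t0 * (1 - \<rho>))) \<le> exp (- ln (4 / \<theta>))" by simp
  also have "\<dots> = \<theta> / 4" using th by (simp add: exp_minus)
  finally have "exp (- (c * t0 * (1 - \<rho>))) / \<theta> \<le> 1/4" using th by (simp add: divide_le_eq)
  then have "\<forall>\<eta>\<in>east_states L. east_tv q L t0 \<eta> \<le> 1/4"
    using bound[of t0] t01 by (meson order_trans zero_le_one)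
  then show ?thesis using t01 by blast
qed

end

context qpar begin

lemma Tmix_mono:
  assumes "1 \<le> L" "L \<le> L'"
  shows "T_mix q L \<le> T_mix q L'"
  unfolding T_mix_def
proof (rule cInf_superset_mono)
  have L': "1 \<le> L'" using assms by simp
  obtain t0 where "t0 \<ge> 1" "\<forall>\<eta>\<in>east_states L'. east_tv q L' t0 \<eta> \<le> 1/4" using mixing_exists[OF L'] by blast
  then have "t0 \<in> {t. 0 \<le> t \<and> (\<forall>\<eta>\<in>east_states L'. east_tv q L' t \<eta> \<le> 1 / 4)}" by simp
  then show "{t. 0 \<le> t \<and> (\<forall>\<eta>\<in>east_states L'. east_tv q L' t \<eta> \<le> 1 / 4)} \<noteq> {}" by blast
  show "bdd_below {t. 0 \<le> t \<and> (\<forall>\<eta>\<in>east_states L. east_tv q L t \<eta> \<le> 1 / 4)}"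
    by (rule bdd_belowI[of _ 0]) auto
  show "{t. 0 \<le> t \<and> (\<forall>\<eta>\<in>east_states L'. east_tv q L' t \<eta> \<le> 1 / 4)}
      \<subseteq> {t. 0 \<le> t \<and> (\<forall>\<eta>\<in>east_states L. east_tv q L t \<eta> \<le> 1 / 4)}"
  proof
    fix t assume "t \<in> {t. 0 \<le> t \<and> (\<forall>\<eta>\<in>east_states L'. east_tv q L' t \<eta> \<le> 1 / 4)}"
    then have t: "0 \<le> t" "\<forall>\<eta>\<in>east_states L'. east_tv q L' t \<eta> \<le> 1 / 4" by auto
    have "\<forall>\<eta>\<in>east_states L. east_tv q L t \<eta> \<le> 1 / 4"
    proof
      fix \<eta> assume h: "\<eta> \<in> east_states L"
      then have "\<eta> \<in> east_states L'" using states_mono[OF assms(2)] by blast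
      then show "east_tv q L t \<eta> \<le> 1 / 4" using tv_mono[OF assms(2) h q0' q1', of t] t(2) by fastforce
    qed
    then show "t \<in> {t. 0 \<le> t \<and> (\<forall>\<eta>\<in>east_states L. east_tv q L t \<eta> \<le> 1 / 4)}" using t by simp
  qed
qed

definition EV :: "nat \<Rightarrow> real set" where
  "EV L = {ev. ev > 0 \<and> (\<exists>f. (\<exists>\<sigma>\<in>east_states L. f \<sigma> \<noteq> 0) \<and>
      (\<forall>\<sigma>\<in>east_states L. - east_gen q L f \<sigma> = ev * f \<sigma>))}"

lemma gap_EV: "east_gap q L = Inf (EV L)"
  by (simp add: east_gap_def EV_def)

lemma one_EV:
  assumes L: "1 \<le> L"
  shows "1 \<in> EV L"
proof -
  define f where "f \<sigma> = (if \<sigma> (1::nat) then 1 else 0) - (1 - q)" for \<sigma> :: "nat \<Rightarrow> bool"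
  have "zero_st \<in> east_states L" by (rule zero_states)
  moreover have "f zero_st \<noteq> 0" using q1 by (simp add: f_def zero_st_def)
  moreover have "- east_gen q L f \<sigma> = 1 * f \<sigma>" for \<sigma>
  proof -
    have "east_gen q L f \<sigma> = (\<Sum>x\<in>insert 1 {2..L}. east_c \<sigma> x *
      ((1 - q) * f (\<sigma>(x := True)) + q * f (\<sigma>(x := False)) - f \<sigma>))"
      unfolding east_gen_def using L by (intro sum.cong) auto
    also have "\<dots> = east_c \<sigma> 1 * ((1 - q) * f (\<sigma>(1 := True)) + q * f (\<sigma>(1 := False)) - f \<sigma>)"
    proof -
      have "(\<Sum>x\<in>{2..L}. east_c \<sigma> x * ((1 - q) * f (\<sigma>(x := True)) + q * f (\<sigma>(x := False)) - f \<sigma>)) = 0"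
        by (intro sum.neutral) (auto simp: f_def algebra_simps)
      then show ?thesis by simp
    qed
    also have "\<dots> = - f \<sigma>" by (simp add: east_c_def f_def algebra_simps)
    finally show ?thesis by simp
  qed
  ultimately show ?thesis unfolding EV_def by auto
qed

lemma EV_mono:
  assumes "L \<le> L'"
  shows "EV L \<subseteq> EV L'"
proof
  fix ev assume "ev \<in> EV L"
  then obtain f \<sigma> where ev: "ev > 0" and s: "\<sigma> \<in> east_states L" "f \<sigma> \<noteq> 0"
    and e: "\<forall>\<sigma>\<in>east_states L. - east_gen q L f \<sigma> = ev * f \<sigma>" unfolding EV_def by blast
  define g where "g \<zeta> = f (proj L \<zeta>)" for \<zeta>
  have "\<sigma> \<in> east_states L'" using s states_mono[OF assms] by blast
  moreover have "g \<sigma> \<noteq> 0" using s by (simp add: g_def proj_id)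
  moreover have "\<forall>\<zeta>\<in>east_states L'. - east_gen q L' g \<zeta> = ev * g \<zeta>"
  proof
    fix \<zeta> assume "\<zeta> \<in> east_states L'"
    then have "proj L \<zeta> \<in> east_states L" by (rule proj_states)
    then show "- east_gen q L' g \<zeta> = ev * g \<zeta>"
      unfolding g_def gen_proj[OF assms] using e by simp
  qed
  ultimately show "ev \<in> EV L'" using ev unfolding EV_def by blast
qed

lemma eig_pow:
  assumes e: "\<forall>\<sigma>\<in>east_states L. - east_gen q L f \<sigma> = ev * f \<sigma>" and h: "\<eta> \<in> east_states L"
  shows "(\<Sum>\<sigma>\<in>east_states L. mat_pow (east_states L) (east_rate q L) n \<eta> \<sigma> * f \<sigma>) = (- ev) ^ n * f \<eta>"
  using h
proof (induction n arbitrary: \<eta>)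
  case 0 then show ?case using finite_states[of L] by simp
next
  case (Suc n)
  let ?S = "east_states L" and ?Q = "east_rate q L"
  have "(\<Sum>\<sigma>\<in>?S. mat_pow ?S ?Q (Suc n) \<eta> \<sigma> * f \<sigma>) = (\<Sum>\<sigma>\<in>?S. \<Sum>\<zeta>\<in>?S. ?Q \<eta> \<zeta> * (mat_pow ?S ?Q n \<zeta> \<sigma> * f \<sigma>))"
    by (simp add: sum_distrib_right mult.assoc)
  also have "\<dots> = (\<Sum>\<zeta>\<in>?S. \<Sum>\<sigma>\<in>?S. ?Q \<eta> \<zeta> * (mat_pow ?S ?Q n \<zeta> \<sigma> * f \<sigma>))" by (rule sum.swap)
  also have "\<dots> = (\<Sum>\<zeta>\<in>?S. ?Q \<eta> \<zeta> * ((- ev) ^ n * f \<zeta>))"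
    by (intro sum.cong refl) (simp add: sum_distrib_left[symmetric] Suc.IH)
  also have "\<dots> = (- ev) ^ n * east_gen q L f \<eta>" unfolding gen_sum[OF Suc.prems]
    by (simp add: sum_distrib_left algebra_simps)
  also have "\<dots> = (- ev) ^ Suc n * f \<eta>"
  proof -
    have g: "east_gen q L f \<eta> = - (ev * f \<eta>)" using e Suc.prems by (metis minus_minus)
    show ?thesis unfolding g by (simp add: algebra_simps)
  qed
  finally show ?case .
qed

lemma eig_heat:
  assumes e: "\<forall>\<sigma>\<in>east_states L. - east_gen q L f \<sigma> = ev * f \<sigma>" and h: "\<eta> \<in> east_states L"
  shows "(\<Sum>\<sigma>\<in>east_states L. east_heat q L t \<eta> \<sigma> * f \<sigma>) = exp (- ev * t) * f \<eta>"
proof -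
  let ?S = "east_states L" and ?Q = "east_rate q L"
  have sm: "summable (\<lambda>n. t ^ n / fact n * mat_pow ?S ?Q n \<eta> \<sigma> * f \<sigma>)" for \<sigma>
    by (rule summable_mult2) (rule mat_exp_summable[OF finite_states rate_abs_le[OF q0' q1']])
  have "(\<Sum>\<sigma>\<in>?S. east_heat q L t \<eta> \<sigma> * f \<sigma>) = (\<Sum>\<sigma>\<in>?S. \<Sum>n. t ^ n / fact n * mat_pow ?S ?Q n \<eta> \<sigma> * f \<sigma>)"
    unfolding east_heat_def mat_exp_def
    by (intro sum.cong refl) (rule suminf_mult2[OF mat_exp_summable[OF finite_states rate_abs_le[OF q0' q1']]])
  also have "\<dots> = (\<Sum>n. \<Sum>\<sigma>\<in>?S. t ^ n / fact n * mat_pow ?S ?Q n \<eta> \<sigma> * f \<sigma>)"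
    by (rule suminf_sum[symmetric]) (rule sm)
  also have "\<dots> = (\<Sum>n. (- ev * t) ^ n / fact n * f \<eta>)"
  proof (intro suminf_cong)
    fix n
    have "(\<Sum>\<sigma>\<in>?S. t ^ n / fact n * mat_pow ?S ?Q n \<eta> \<sigma> * f \<sigma>) = t ^ n / fact n * (\<Sum>\<sigma>\<in>?S. mat_pow ?S ?Q n \<eta> \<sigma> * f \<sigma>)"
      by (simp add: sum_distrib_left mult.assoc)
    also have "\<dots> = (- ev * t) ^ n / fact n * f \<eta>" unfolding eig_pow[OF e h]
      by (simp add: power_mult_distrib[symmetric] mult.commute)
    finally show "(\<Sum>\<sigma>\<in>?S. t ^ n / fact n * mat_pow ?S ?Q n \<eta> \<sigma> * f \<sigma>) = (- ev * t) ^ n / fact n * f \<eta>" .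
  qed
  also have "\<dots> = exp (- ev * t) * f \<eta>"
    using sums_unique[OF sums_mult2[OF exp_sums_real, of "- ev * t" "f \<eta>"]] by simp
  finally show ?thesis .
qed

lemma EV_lower:
  assumes ev: "ev \<in> EV L" and t0: "\<forall>\<eta>\<in>east_states L. east_tv q L t0 \<eta> \<le> 1/4" "0 < t0"
  shows "ln 2 / t0 \<le> ev"
proof -
  obtain f \<sigma>0 where ev0: "ev > 0" and s: "\<sigma>0 \<in> east_states L" "f \<sigma>0 \<noteq> 0"
    and e: "\<forall>\<sigma>\<in>east_states L. - east_gen q L f \<sigma> = ev * f \<sigma>" using ev unfolding EV_def by blast
  let ?S = "east_states L"
  define M where "M = Max ((\<lambda>\<sigma>. \<bar>f \<sigma>\<bar>) ` ?S)"
  have ne: "(\<lambda>\<sigma>. \<bar>f \<sigma>\<bar>) ` ?S \<noteq> {}" using s by auto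
  obtain \<eta> where h: "\<eta> \<in> ?S" and hM: "\<bar>f \<eta>\<bar> = M" using Max_in[OF finite_imageI[OF finite_states] ne] unfolding M_def by auto
  have Mge: "\<bar>f \<sigma>\<bar> \<le> M" if "\<sigma> \<in> ?S" for \<sigma> unfolding M_def using that by (intro Max_ge finite_imageI finite_states) auto
  have M0: "M > 0" using Mge[OF s(1)] s(2) by simp
  have pif: "(\<Sum>\<sigma>\<in>?S. east_pi q L \<sigma> * f \<sigma>) = 0"
  proof -
    have "0 = (\<Sum>\<sigma>\<in>?S. east_pi q L \<sigma> * east_gen q L f \<sigma>)" by (rule pi_stationary[symmetric])
    also have "\<dots> = (\<Sum>\<sigma>\<in>?S. east_pi q L \<sigma> * (- ev * f \<sigma>))" 
    proof (intro sum.cong refl)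
      fix \<sigma> assume "\<sigma> \<in> ?S"
      then have "east_gen q L f \<sigma> = - (ev * f \<sigma>)" using e by (metis minus_minus)
      then show "east_pi q L \<sigma> * east_gen q L f \<sigma> = east_pi q L \<sigma> * (- ev * f \<sigma>)" by simp
    qed
    also have "\<dots> = - ev * (\<Sum>\<sigma>\<in>?S. east_pi q L \<sigma> * f \<sigma>)" by (simp add: sum_distrib_left algebra_simps)
    finally show ?thesis using ev0 by simp
  qed
  have "exp (- ev * t0) * M = \<bar>exp (- ev * t0) * f \<eta>\<bar>" using hM by (simp add: abs_mult)
  also have "\<dots> = \<bar>\<Sum>\<sigma>\<in>?S. (east_heat q L t0 \<eta> \<sigma> - east_pi q L \<sigma>) * f \<sigma>\<bar>"
    using eig_heat[OF e h, of t0] pif by (simp add: left_diff_distrib sum_subtractf)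
  also have "\<dots> \<le> (\<Sum>\<sigma>\<in>?S. \<bar>east_heat q L t0 \<eta> \<sigma> - east_pi q L \<sigma>\<bar> * M)"
    by (rule order_trans[OF sum_abs sum_mono]) (auto simp: abs_mult intro!: mult_left_mono Mge)
  also have "\<dots> = 2 * east_tv q L t0 \<eta> * M" by (simp add: east_tv_def sum_distrib_right)
  also have "\<dots> \<le> 2 * (1/4) * M" using t0(1) h M0 by (intro mult_right_mono) auto
  finally have "exp (- ev * t0) \<le> 1/2" using M0 by simp
  then have "ln (exp (- ev * t0)) \<le> ln (1/2)" by (subst ln_le_cancel_iff) auto
  then have "- ev * t0 \<le> ln (1/2)" by simp
  then have "ln 2 \<le> ev * t0" by (simp add: ln_div)
  then show ?thesis using t0(2) by (simp add: divide_le_eq)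
qed

lemma Trel_mono:
  assumes "1 \<le> L" "L \<le> L'"
  shows "T_rel q L \<le> T_rel q L'"
proof -
  have L': "1 \<le> L'" using assms by simp
  obtain t0 where t0: "t0 \<ge> 1" "\<forall>\<eta>\<in>east_states L'. east_tv q L' t0 \<eta> \<le> 1/4" using mixing_exists[OF L'] by blast
  have ne: "EV L \<noteq> {}" using one_EV[OF assms(1)] by blast
  have ne': "EV L' \<noteq> {}" using one_EV[OF L'] by blast
  have bdd: "bdd_below (EV L')" by (rule bdd_belowI[of _ 0]) (auto simp: EV_def)
  have g1: "east_gap q L' \<le> east_gap q L" unfolding gap_EV
    by (rule cInf_superset_mono[OF ne bdd EV_mono[OF assms(2)]])
  have g0: "ln 2 / t0 \<le> east_gap q L'" unfolding gap_EV
    by (rule cInf_greatest[OF ne']) (rule EV_lower[OF _ t0(2)], use t0 in auto)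
  have "0 < ln 2 / t0" using t0 by simp
  then have gp: "0 < east_gap q L'" using g0 by linarith
  show ?thesis unfolding T_rel_def using gp g1 by (simp add: frac_le)
qed

end

context qpar begin

definition SK :: "nat \<Rightarrow> (nat \<Rightarrow> bool) set" where "SK L = {\<sigma>\<in>east_states L. \<not> \<sigma> L}"

definition Rk :: "nat \<Rightarrow> nat \<Rightarrow> (nat \<Rightarrow> bool) \<Rightarrow> real" where
  "Rk L n \<eta> = (\<Sum>\<sigma>\<in>SK L. mat_pow (SK L) (east_P q L) n \<eta> \<sigma>)"

lemma SK_fin: "finite (SK L)" unfolding SK_def using finite_states by simp

lemma SK_sub: "SK L \<subseteq> east_states L" unfolding SK_def by auto

lemma target_eq: "east_states L - east_target L = SK L"
  by (auto simp: SK_def east_target_def)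

lemma SKpow_nonneg: "0 \<le> mat_pow (SK L) (east_P q L) n \<eta> \<zeta>"
  by (induction n arbitrary: \<eta>) (auto intro!: sum_nonneg mult_nonneg_nonneg P_nonneg)

lemma Rk_nonneg: "0 \<le> Rk L n \<eta>"
  unfolding Rk_def by (intro sum_nonneg SKpow_nonneg)

lemma Rk_0: "\<eta> \<in> SK L \<Longrightarrow> Rk L 0 \<eta> = 1"
  unfolding Rk_def using SK_fin by simp

lemma Rk_Suc: "Rk L (Suc n) \<eta> = (\<Sum>\<zeta>\<in>SK L. east_P q L \<eta> \<zeta> * Rk L n \<zeta>)"
proof -
  have "Rk L (Suc n) \<eta> = (\<Sum>\<sigma>\<in>SK L. \<Sum>\<zeta>\<in>SK L. east_P q L \<eta> \<zeta> * mat_pow (SK L) (east_P q L) n \<zeta> \<sigma>)"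
    unfolding Rk_def by simp
  also have "\<dots> = (\<Sum>\<zeta>\<in>SK L. \<Sum>\<sigma>\<in>SK L. east_P q L \<eta> \<zeta> * mat_pow (SK L) (east_P q L) n \<zeta> \<sigma>)" by (rule sum.swap)
  finally show ?thesis unfolding Rk_def by (simp add: sum_distrib_left)
qed

lemma SK_rowsum: "\<eta> \<in> SK L \<Longrightarrow> (\<Sum>\<zeta>\<in>SK L. east_P q L \<eta> \<zeta>) \<le> 1"
proof -
  assume h: "\<eta> \<in> SK L"
  have "(\<Sum>\<zeta>\<in>SK L. east_P q L \<eta> \<zeta>) \<le> (\<Sum>\<zeta>\<in>east_states L. east_P q L \<eta> \<zeta>)"
    by (rule sum_mono2[OF finite_states SK_sub]) (auto intro: P_nonneg)
  also have "\<dots> = 1" using h SK_sub by (intro P_rowsum) auto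
  finally show ?thesis .
qed

lemma Rk_le1: "\<eta> \<in> SK L \<Longrightarrow> Rk L n \<eta> \<le> 1"
proof (induction n arbitrary: \<eta>)
  case 0 then show ?case by (simp add: Rk_0)
next
  case (Suc n)
  have "Rk L (Suc n) \<eta> \<le> (\<Sum>\<zeta>\<in>SK L. east_P q L \<eta> \<zeta> * 1)"
    unfolding Rk_Suc by (intro sum_mono mult_left_mono Suc.IH P_nonneg)
  also have "\<dots> \<le> 1" using SK_rowsum[OF Suc.prems] by simp
  finally show ?case .
qed

lemma Rk_step:
  assumes h: "\<eta> \<in> SK L" and h': "\<eta>' \<in> SK L"
  shows "east_P q L \<eta> \<eta>' * (1 - Rk L n \<eta>') \<le> 1 - Rk L (Suc n) \<eta>"
proof -
  have "Rk L (Suc n) \<eta> = east_P q L \<eta> \<eta>' * Rk L n \<eta>' + (\<Sum>\<zeta>\<in>SK L - {\<eta>'}. east_P q L \<eta> \<zeta> * Rk L n \<zeta>)"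
    unfolding Rk_Suc using h' SK_fin by (simp add: sum.remove)
  also have "(\<Sum>\<zeta>\<in>SK L - {\<eta>'}. east_P q L \<eta> \<zeta> * Rk L n \<zeta>) \<le> (\<Sum>\<zeta>\<in>SK L - {\<eta>'}. east_P q L \<eta> \<zeta>)"
    by (intro sum_mono) (auto intro: mult_left_le Rk_le1 P_nonneg)
  also have "\<dots> = (\<Sum>\<zeta>\<in>SK L. east_P q L \<eta> \<zeta>) - east_P q L \<eta> \<eta>'"
    using h' SK_fin by (simp add: sum.remove)
  finally show ?thesis using SK_rowsum[OF h] by (simp add: algebra_simps)
qed

lemma kill_aux:
  assumes L: "1 \<le> L"
  shows "\<forall>\<eta>\<in>SK L. \<forall>j. (\<forall>y. y \<le> j \<longrightarrow> \<not> \<eta> y) \<longrightarrow> L \<le> j + Suc n \<longrightarrow>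
     (q / real (Suc L)) ^ Suc n \<le> 1 - Rk L (Suc n) \<eta>"
proof (induction n)
  case 0
  show ?case
  proof (intro ballI allI impI)
    fix \<eta> j assume h: "\<eta> \<in> SK L" and cl: "\<forall>y. y \<le> j \<longrightarrow> \<not> \<eta> y" and lj: "L \<le> j + Suc 0"
    have hs: "\<eta> \<in> east_states L" and nL: "\<not> \<eta> L" using h by (auto simp: SK_def)
    have cL: "east_c \<eta> L = 1"
    proof (cases "L = 1")
      case False then show ?thesis using cl lj by (simp add: east_c_def)
    qed (simp add: east_c_def)
    have ne: "\<eta>(L := True) \<noteq> \<eta>" using nL by (metis fun_upd_same)
    have Lin: "L \<in> {1..L}" using L by simp
    have t: "\<eta>(L := True) \<in> east_states L - SK L" using upd_states[OF hs Lin] by (auto simp: SK_def)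
    have "1 - Rk L (Suc 0) \<eta> = (\<Sum>\<zeta>\<in>east_states L. east_P q L \<eta> \<zeta>) - (\<Sum>\<zeta>\<in>SK L. east_P q L \<eta> \<zeta>)"
      using P_rowsum[OF hs] by (simp add: Rk_Suc Rk_0 cong: sum.cong)
    also have "\<dots> = (\<Sum>\<zeta>\<in>east_states L - SK L. east_P q L \<eta> \<zeta>)"
      using sum.subset_diff[OF SK_sub finite_states, of "east_P q L \<eta>"] by simp
    also have "\<dots> \<ge> east_P q L \<eta> (\<eta>(L := True))"
      by (rule member_le_sum[OF t]) (auto intro: P_nonneg simp: finite_states)
    finally have "east_P q L \<eta> (\<eta>(L := True)) \<le> 1 - Rk L (Suc 0) \<eta>" .
    moreover have "(1 - q) / real (Suc L) \<le> east_P q L \<eta> (\<eta>(L := True))" by (rule P_flipT[OF Lin cL ne])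
    moreover have "q / real (Suc L) \<le> (1 - q) / real (Suc L)" using pq by (simp add: divide_right_mono)
    ultimately show "(q / real (Suc L)) ^ Suc 0 \<le> 1 - Rk L (Suc 0) \<eta>" by simp
  qed
next
  case (Suc n)
  show ?case
  proof (intro ballI allI impI)
    fix \<eta> j assume h: "\<eta> \<in> SK L" and cl: "\<forall>y. y \<le> j \<longrightarrow> \<not> \<eta> y" and lj: "L \<le> j + Suc (Suc n)"
    have hs: "\<eta> \<in> east_states L" and nL: "\<not> \<eta> L" using h by (auto simp: SK_def)
    define x where "x = min (Suc j) L"
    note sc = step_choice[OF L hs cl, folded x_def]
    have h': "\<eta>(x := False) \<in> SK L" using updF_states[OF hs] nL by (auto simp: SK_def)
    have ih: "(q / real (Suc L)) ^ Suc n \<le> 1 - Rk L (Suc n) (\<eta>(x := False))"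
      using Suc.IH h' sc(3) lj by auto
    have "q / real (Suc L) * (q / real (Suc L)) ^ Suc n \<le> east_P q L \<eta> (\<eta>(x := False)) * (1 - Rk L (Suc n) (\<eta>(x := False)))"
      by (intro mult_mono P_flip sc ih) (auto intro: P_nonneg simp: q0')
    also have "\<dots> \<le> 1 - Rk L (Suc (Suc n)) \<eta>" by (rule Rk_step[OF h h'])
    finally show "(q / real (Suc L)) ^ Suc (Suc n) \<le> 1 - Rk L (Suc (Suc n)) \<eta>" by simp
  qed
qed

lemma Rk_L:
  assumes L: "1 \<le> L" and h: "\<eta> \<in> SK L"
  shows "Rk L L \<eta> \<le> 1 - (q / real (Suc L)) ^ L"
proof -
  obtain m where m: "L = Suc m" using L by (cases L) auto
  have "\<forall>y. y \<le> 0 \<longrightarrow> \<not> \<eta> y" using h by (auto simp: SK_def east_states_def)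
  then have "(q / real (Suc L)) ^ Suc m \<le> 1 - Rk L (Suc m) \<eta>" using kill_aux[OF L, of m] h m by auto
  then show ?thesis using m by simp
qed

lemma Rk_add:
  assumes h: "\<eta> \<in> SK L"
  shows "Rk L (m + n) \<eta> = (\<Sum>\<zeta>\<in>SK L. mat_pow (SK L) (east_P q L) m \<eta> \<zeta> * Rk L n \<zeta>)"
proof -
  have "Rk L (m + n) \<eta> = (\<Sum>\<sigma>\<in>SK L. \<Sum>\<zeta>\<in>SK L. mat_pow (SK L) (east_P q L) m \<eta> \<zeta> * mat_pow (SK L) (east_P q L) n \<zeta> \<sigma>)"
    unfolding Rk_def using mat_pow_add[OF SK_fin h] by simp
  also have "\<dots> = (\<Sum>\<zeta>\<in>SK L. \<Sum>\<sigma>\<in>SK L. mat_pow (SK L) (east_P q L) m \<eta> \<zeta> * mat_pow (SK L) (east_P q L) n \<zeta> \<sigma>)"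
    by (rule sum.swap)
  finally show ?thesis unfolding Rk_def by (simp add: sum_distrib_left)
qed

lemma Rk_bound:
  assumes L: "1 \<le> L"
  shows "\<eta> \<in> SK L \<Longrightarrow> Rk L n \<eta> \<le> (1 - (q / real (Suc L)) ^ L) ^ (n div L)"
proof (induction n arbitrary: \<eta> rule: less_induct)
  case (less n)
  define \<theta> where "\<theta> = 1 - (q / real (Suc L)) ^ L"
  have th0: "0 \<le> \<theta>" using Rk_L[OF L less.prems] Rk_nonneg[of L L \<eta>] by (simp add: \<theta>_def)
  show ?case
  proof (cases "n < L")
    case True then show ?thesis using Rk_le1[OF less.prems] by simp
  next
    case False
    then obtain m where m: "n = L + m" by (metis le_add_diff_inverse not_less)
    have "Rk L n \<eta> = (\<Sum>\<zeta>\<in>SK L. mat_pow (SK L) (east_P q L) L \<eta> \<zeta> * Rk L m \<zeta>)"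
      unfolding m by (rule Rk_add[OF less.prems])
    also have "\<dots> \<le> (\<Sum>\<zeta>\<in>SK L. mat_pow (SK L) (east_P q L) L \<eta> \<zeta> * \<theta> ^ (m div L))"
      using less.IH[of m] m L by (intro sum_mono mult_left_mono SKpow_nonneg) (auto simp: \<theta>_def)
    also have "\<dots> = Rk L L \<eta> * \<theta> ^ (m div L)" by (simp add: Rk_def sum_distrib_right)
    also have "\<dots> \<le> \<theta> * \<theta> ^ (m div L)"
      using Rk_L[OF L less.prems] th0 by (intro mult_right_mono) (auto simp: \<theta>_def)
    also have "\<dots> = \<theta> ^ (n div L)" using L by (simp add: m)
    finally show ?thesis by (simp add: \<theta>_def)
  qed
qed

end

context qpar begin

lemma theta_facts:
  assumes L: "1 \<le> L"
  shows "0 < 1 - (q / real (Suc L)) ^ L" "1 - (q / real (Suc L)) ^ L < 1"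
proof -
  have qc: "0 < q / real (Suc L)" "q / real (Suc L) < 1" using q0 q1 by (auto simp: divide_less_eq)
  have "(q / real (Suc L)) ^ L \<le> (q / real (Suc L)) ^ 1"
    by (rule power_decreasing) (use L qc in auto)
  then have "(q / real (Suc L)) ^ L \<le> q / real (Suc L)" by (simp only: power_one_right)
  then show "0 < 1 - (q / real (Suc L)) ^ L" using qc by linarith
  show "1 - (q / real (Suc L)) ^ L < 1" using qc by simp
qed

lemma Rk_summable:
  assumes L: "1 \<le> L" and h: "\<eta> \<in> SK L"
  shows "summable (\<lambda>n. Rk L n \<eta>)"
proof -
  define \<theta> where "\<theta> = 1 - (q / real (Suc L)) ^ L"
  define \<rho> where "\<rho> = \<theta> powr (1 / real L)"
  have th: "0 < \<theta>" "\<theta> < 1" using theta_facts[OF L] by (auto simp: \<theta>_def)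
  have rho: "0 < \<rho>" "\<rho> < 1"
  proof -
    show "0 < \<rho>" using th by (simp add: \<rho>_def)
    have "\<theta> powr (1 / real L) < 1 powr (1 / real L)"
      by (rule powr_less_mono2) (use th L in auto)
    then show "\<rho> < 1" by (simp add: \<rho>_def)
  qed
  have g: "summable (\<lambda>n. \<rho> ^ n / \<theta>)" using rho by (intro summable_divide summable_geometric) simp
  show ?thesis
  proof (rule summable_comparison_test'[OF g])
    fix n
    have "Rk L n \<eta> \<le> \<theta> ^ (n div L)" unfolding \<theta>_def by (rule Rk_bound[OF L h])
    also have "\<dots> \<le> \<rho> ^ n / \<theta>" unfolding \<rho>_def by (rule theta_pow_bound) (use th L in auto)
    finally show "norm (Rk L n \<eta>) \<le> \<rho> ^ n / \<theta>" using Rk_nonneg[of L n \<eta>] by simp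
  qed
qed

definition hK :: "nat \<Rightarrow> (nat \<Rightarrow> bool) \<Rightarrow> real" where
  "hK L \<eta> = (\<Sum>n. Rk L n \<eta>) / real (Suc L)"

lemma hK_nonneg: "1 \<le> L \<Longrightarrow> \<eta> \<in> SK L \<Longrightarrow> 0 \<le> hK L \<eta>"
  unfolding hK_def by (intro divide_nonneg_pos suminf_nonneg Rk_summable Rk_nonneg) auto

lemma hK_eq:
  assumes L: "1 \<le> L" and h: "\<eta> \<in> SK L"
  shows "(\<Sum>\<zeta>\<in>SK L. east_rate q L \<eta> \<zeta> * hK L \<zeta>) = -1"
proof -
  define c where "c = real (Suc L)"
  have c0: "c > 0" by (simp add: c_def)
  have "(\<Sum>\<zeta>\<in>SK L. east_P q L \<eta> \<zeta> * (\<Sum>n. Rk L n \<zeta>)) = (\<Sum>\<zeta>\<in>SK L. \<Sum>n. east_P q L \<eta> \<zeta> * Rk L n \<zeta>)"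
    by (intro sum.cong refl suminf_mult[symmetric] Rk_summable[OF L]) 
  also have "\<dots> = (\<Sum>n. \<Sum>\<zeta>\<in>SK L. east_P q L \<eta> \<zeta> * Rk L n \<zeta>)"
    by (rule suminf_sum[symmetric]) (intro summable_mult Rk_summable[OF L])
  also have "\<dots> = (\<Sum>n. Rk L (Suc n) \<eta>)" by (simp add: Rk_Suc)
  also have "\<dots> = (\<Sum>n. Rk L n \<eta>) - 1" using suminf_split_head[OF Rk_summable[OF L h]] Rk_0[OF h] by simp
  finally have A: "(\<Sum>\<zeta>\<in>SK L. east_P q L \<eta> \<zeta> * (\<Sum>n. Rk L n \<zeta>)) = (\<Sum>n. Rk L n \<eta>) - 1" .
  have "(\<Sum>\<zeta>\<in>SK L. east_P q L \<eta> \<zeta> * (\<Sum>n. Rk L n \<zeta>))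
      = (\<Sum>\<zeta>\<in>SK L. (if \<eta> = \<zeta> then 1 else 0) * (\<Sum>n. Rk L n \<zeta>)) + (\<Sum>\<zeta>\<in>SK L. east_rate q L \<eta> \<zeta> * hK L \<zeta>)"
    by (simp add: east_P_def hK_def sum.distrib algebra_simps)
  also have "(\<Sum>\<zeta>\<in>SK L. (if \<eta> = \<zeta> then 1 else 0) * (\<Sum>n. Rk L n \<zeta>)) = (\<Sum>n. Rk L n \<eta>)"
    using h SK_fin by simp
  finally show ?thesis using A by simp
qed

lemma min_principle:
  assumes L: "1 \<le> L" and w: "\<And>\<eta>. \<eta> \<in> SK L \<Longrightarrow> (\<Sum>\<zeta>\<in>SK L. east_rate q L \<eta> \<zeta> * w \<zeta>) \<le> 0"
    and h: "\<eta> \<in> SK L"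
  shows "0 \<le> w \<eta>"
proof -
  let ?S = "SK L" and ?P = "east_P q L"
  have Pw: "(\<Sum>\<zeta>\<in>?S. ?P \<eta> \<zeta> * w \<zeta>) \<le> w \<eta>" if h: "\<eta> \<in> ?S" for \<eta>
  proof -
    have "(\<Sum>\<zeta>\<in>?S. ?P \<eta> \<zeta> * w \<zeta>) = (\<Sum>\<zeta>\<in>?S. (if \<eta> = \<zeta> then 1 else 0) * w \<zeta>) + (\<Sum>\<zeta>\<in>?S. east_rate q L \<eta> \<zeta> * w \<zeta>) / real (Suc L)"
      by (simp add: east_P_def sum.distrib algebra_simps sum_divide_distrib)
    also have "\<dots> \<le> w \<eta>" using w[OF h] h SK_fin by (simp add: divide_nonpos_pos)
    finally show ?thesis .
  qed
  have pow: "(\<Sum>\<sigma>\<in>?S. mat_pow ?S ?P n \<eta> \<sigma> * w \<sigma>) \<le> w \<eta>" if h: "\<eta> \<in> ?S" for n \<eta>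
    using h
  proof (induction n arbitrary: \<eta>)
    case 0 then show ?case using SK_fin by simp
  next
    case (Suc n)
    have "(\<Sum>\<sigma>\<in>?S. mat_pow ?S ?P (Suc n) \<eta> \<sigma> * w \<sigma>) = (\<Sum>\<sigma>\<in>?S. \<Sum>\<zeta>\<in>?S. ?P \<eta> \<zeta> * (mat_pow ?S ?P n \<zeta> \<sigma> * w \<sigma>))"
      by (simp add: sum_distrib_right mult.assoc)
    also have "\<dots> = (\<Sum>\<zeta>\<in>?S. \<Sum>\<sigma>\<in>?S. ?P \<eta> \<zeta> * (mat_pow ?S ?P n \<zeta> \<sigma> * w \<sigma>))" by (rule sum.swap)
    also have "\<dots> = (\<Sum>\<zeta>\<in>?S. ?P \<eta> \<zeta> * (\<Sum>\<sigma>\<in>?S. mat_pow ?S ?P n \<zeta> \<sigma> * w \<sigma>))" by (simp add: sum_distrib_left)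
    also have "\<dots> \<le> (\<Sum>\<zeta>\<in>?S. ?P \<eta> \<zeta> * w \<zeta>)" by (intro sum_mono mult_left_mono Suc.IH P_nonneg)
    also have "\<dots> \<le> w \<eta>" by (rule Pw[OF Suc.prems])
    finally show ?case .
  qed
  define B where "B = (\<Sum>\<sigma>\<in>?S. \<bar>w \<sigma>\<bar>)"
  have lb: "- B * Rk L n \<eta> \<le> w \<eta>" for n
  proof -
    have "- B * Rk L n \<eta> = (\<Sum>\<sigma>\<in>?S. mat_pow ?S ?P n \<eta> \<sigma> * (- B))" by (simp add: Rk_def sum_distrib_right sum_distrib_left sum_negf mult.commute)
    also have "\<dots> \<le> (\<Sum>\<sigma>\<in>?S. mat_pow ?S ?P n \<eta> \<sigma> * w \<sigma>)"
    proof (intro sum_mono mult_left_mono SKpow_nonneg)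
      fix \<sigma> assume "\<sigma> \<in> ?S"
      then have "\<bar>w \<sigma>\<bar> \<le> B" unfolding B_def by (intro member_le_sum SK_fin) auto
      then show "- B \<le> w \<sigma>" by simp
    qed
    also have "\<dots> \<le> w \<eta>" by (rule pow[OF h])
    finally show ?thesis .
  qed
  have "(\<lambda>n. - B * Rk L n \<eta>) \<longlonglongrightarrow> - B * 0"
    by (intro tendsto_mult tendsto_const summable_LIMSEQ_zero Rk_summable[OF L h])
  then show ?thesis using lb by (intro LIMSEQ_le_const2[of _ 0]) auto
qed

end

lemma sum_split2: "1 \<le> (L::nat) \<Longrightarrow> (\<Sum>x\<in>{1..L}. F x) = (\<Sum>x\<in>{1..<L}. F x) + (F L :: real)"
proof -
  assume L: "1 \<le> L"
  have "{1..L} = insert L {1..<L}" using L by auto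
  then show ?thesis by simp
qed

lemma sum_split3: "1 \<le> (L::nat) \<Longrightarrow> (\<Sum>x\<in>{1..Suc L}. F x) = (\<Sum>x\<in>{1..<L}. F x) + F L + (F (Suc L) :: real)"
proof -
  assume L: "1 \<le> L"
  have "{1..Suc L} = insert (Suc L) {1..L}" by auto
  then have "(\<Sum>x\<in>{1..Suc L}. F x) = F (Suc L) + (\<Sum>x\<in>{1..L}. F x)" by simp
  then show ?thesis using sum_split2[OF L, of F] by simp
qed

lemma sum_rate_restrict:
  assumes "\<eta> \<in> east_states L" "S \<subseteq> east_states L"
  shows "(\<Sum>\<zeta>\<in>S. east_rate q L \<eta> \<zeta> * f \<zeta>) = east_gen q L (\<lambda>\<zeta>. if \<zeta> \<in> S then f \<zeta> else 0) \<eta>"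
proof -
  have "east_gen q L (\<lambda>\<zeta>. if \<zeta> \<in> S then f \<zeta> else 0) \<eta> = (\<Sum>\<zeta>\<in>east_states L. if \<zeta> \<in> S then east_rate q L \<eta> \<zeta> * f \<zeta> else 0)"
    unfolding gen_sum[OF assms(1)] by (intro sum.cong refl) auto
  also have "\<dots> = (\<Sum>\<zeta>\<in>east_states L \<inter> S. east_rate q L \<eta> \<zeta> * f \<zeta>)"
    by (rule sum.inter_restrict[OF finite_states, symmetric])
  also have "east_states L \<inter> S = S" using assms(2) by auto
  finally show ?thesis by simp
qed

context qpar begin

lemma subsol:
  assumes L: "1 \<le> L" and h: "\<eta> \<in> SK (Suc L)"
  shows "-1 \<le> (\<Sum>\<zeta>\<in>SK (Suc L). east_rate q (Suc L) \<eta> \<zeta> * (if \<zeta> L then hK L (\<zeta>(L := False)) else 0))"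
proof -
  define g where "g \<zeta> = (if \<zeta> \<in> SK (Suc L) then (if \<zeta> L then hK L (\<zeta>(L := False)) else 0) else 0)" for \<zeta>
  define hh where "hh \<xi> = (if \<xi> \<in> SK L then hK L \<xi> else 0)" for \<xi>
  have hs: "\<eta> \<in> east_states (Suc L)" and nS: "\<not> \<eta> (Suc L)" using h by (auto simp: SK_def)
  have LHS: "(\<Sum>\<zeta>\<in>SK (Suc L). east_rate q (Suc L) \<eta> \<zeta> * (if \<zeta> L then hK L (\<zeta>(L := False)) else 0)) = east_gen q (Suc L) g \<eta>"
    unfolding g_def by (rule sum_rate_restrict[OF hs SK_sub])
  define T' where "T' x = east_c \<eta> x * ((1 - q) * g (\<eta>(x := True)) + q * g (\<eta>(x := False)) - g \<eta>)" for x
  have G: "east_gen q (Suc L) g \<eta> = (\<Sum>x\<in>{1..<L}. T' x) + T' L + T' (Suc L)"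
    unfolding east_gen_def T'_def by (rule sum_split3[OF L])
  have inSK: "\<zeta> \<in> SK (Suc L)" if "\<zeta> \<in> east_states (Suc L)" "\<not> \<zeta> (Suc L)" for \<zeta> using that by (simp add: SK_def)
  have updS: "\<eta>(x := b) \<in> east_states (Suc L)" if "x \<in> {1..Suc L}" for x b using upd_states[OF hs that] .
  have toSK: "\<zeta>(L := False) \<in> SK L" if "\<zeta> \<in> east_states (Suc L)" "\<not> \<zeta> (Suc L)" for \<zeta>
    using that by (auto simp: SK_def east_states_def le_Suc_eq)
  show ?thesis
  proof (cases "\<eta> L")
    case True
    define \<xi> where "\<xi> = \<eta>(L := False)"
    have xi: "\<xi> \<in> SK L" unfolding \<xi>_def by (rule toSK[OF hs nS])
    have xis: "\<xi> \<in> east_states L" using xi by (simp add: SK_def)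
    have gh: "g \<eta> = hK L \<xi>" using h True by (simp add: g_def \<xi>_def)
    define T where "T x = east_c \<xi> x * ((1 - q) * hh (\<xi>(x := True)) + q * hh (\<xi>(x := False)) - hh \<xi>)" for x
    have eqL: "east_gen q L hh \<xi> = -1"
    proof -
      have "hh = (\<lambda>\<zeta>. if \<zeta> \<in> SK L then hK L \<zeta> else 0)" by (simp add: fun_eq_iff hh_def)
      then show ?thesis using hK_eq[OF L xi] sum_rate_restrict[OF xis SK_sub, of q "hK L"] by simp
    qed
    have GL: "east_gen q L hh \<xi> = (\<Sum>x\<in>{1..<L}. T x) + T L"
      unfolding east_gen_def T_def by (rule sum_split2[OF L])
    have Tlow: "T' x = T x" if x: "x \<in> {1..<L}" for x
    proof -
      have x1: "x \<in> {1..Suc L}" "x \<noteq> L" "x \<noteq> Suc L" "x \<in> {1..L}" using x by auto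
      have c: "east_c \<eta> x = east_c \<xi> x" using x by (auto simp: east_c_def \<xi>_def)
      have gb: "g (\<eta>(x := b)) = hh (\<xi>(x := b))" for b
      proof -
        have m: "\<eta>(x := b) \<in> SK (Suc L)" using inSK[OF updS[OF x1(1)]] nS x1 by simp
        have m2: "\<xi>(x := b) \<in> SK L" using upd_states[OF xis x1(4)] xi x1 by (simp add: SK_def)
        have e: "(\<eta>(x := b))(L := False) = \<xi>(x := b)" using x1 by (simp add: \<xi>_def fun_upd_twist)
        show ?thesis using m m2 e x1 True by (simp add: g_def hh_def)
      qed
      show ?thesis unfolding T'_def T_def c gb gh using xi by (simp add: hh_def)
    qed
    have cL: "east_c \<eta> L = east_c \<xi> L" using L by (auto simp: east_c_def \<xi>_def)
    have T'L: "T' L = - east_c \<xi> L * q * hK L \<xi>"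
    proof -
      have a: "\<eta>(L := True) = \<eta>" using True by (simp add: fun_eq_iff)
      have b: "g (\<eta>(L := False)) = 0" by (simp add: g_def)
      show ?thesis unfolding T'_def a b gh cL by (simp add: algebra_simps)
    qed
    have TL: "T L = - east_c \<xi> L * (1 - q) * hK L \<xi>"
    proof -
      have a: "hh (\<xi>(L := True)) = 0" by (simp add: hh_def SK_def)
      have b: "\<xi>(L := False) = \<xi>" by (simp add: \<xi>_def)
      show ?thesis unfolding T_def a b using xi by (simp add: hh_def algebra_simps)
    qed
    have T'S: "T' (Suc L) = 0" using True L by (simp add: T'_def east_c_def)
    have "east_gen q (Suc L) g \<eta> = -1 + east_c \<xi> L * (1 - 2 * q) * hK L \<xi>"
      using G GL eqL TL T'L T'S sum.cong[OF refl Tlow, of "{1..<L}"] by (simp add: algebra_simps)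
    moreover have "0 \<le> east_c \<xi> L * (1 - 2 * q) * hK L \<xi>"
      using hK_nonneg[OF L xi] east_c_nonneg[of \<xi> L] q1 by simp
    ultimately show ?thesis using LHS by simp
  next
    case False
    have g0: "g \<eta> = 0" using False by (simp add: g_def)
    have Tlow: "T' x = 0" if x: "x \<in> {1..<L}" for x
    proof -
      have "g (\<eta>(x := b)) = 0" for b using x False by (simp add: g_def)
      then show ?thesis by (simp add: T'_def g0)
    qed
    have eSK: "\<eta> \<in> SK L" using hs nS False by (auto simp: SK_def east_states_def le_Suc_eq)
    have T'L: "0 \<le> T' L"
    proof -
      have m: "\<eta>(L := True) \<in> SK (Suc L)" using inSK[OF updS] L nS by simp
      have e: "\<eta>(L := False) = \<eta>" using False by (simp add: fun_eq_iff)
      have "g (\<eta>(L := True)) = hK L \<eta>" using m e by (simp add: g_def)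
      moreover have "g (\<eta>(L := False)) = 0" by (simp add: g_def)
      ultimately show ?thesis unfolding T'_def g0
        using hK_nonneg[OF L eSK] east_c_nonneg[of \<eta> L] q1 by simp
    qed
    have T'S: "T' (Suc L) = 0"
    proof -
      have "g (\<eta>(Suc L := True)) = 0" by (simp add: g_def SK_def)
      moreover have "\<eta>(Suc L := False) = \<eta>" using nS by (simp add: fun_eq_iff)
      ultimately show ?thesis by (simp add: T'_def g0)
    qed
    have "east_gen q (Suc L) g \<eta> = T' L" using G Tlow T'S by simp
    then show ?thesis using LHS T'L by simp
  qed
qed

lemma start_SK: "1 \<le> L \<Longrightarrow> east_start L \<in> SK L"
  by (auto simp: east_start_def SK_def east_states_def)

lemma hK_step:
  assumes L: "1 \<le> L"
  shows "hK L (east_start L) \<le> hK (Suc L) (east_start (Suc L))"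
proof -
  define g where "g \<zeta> = (if \<zeta> L then hK L (\<zeta>(L := False)) else 0)" for \<zeta> :: "nat \<Rightarrow> bool"
  define w where "w \<zeta> = hK (Suc L) \<zeta> - g \<zeta>" for \<zeta>
  have L1: "1 \<le> Suc L" by simp
  have "0 \<le> w (east_start (Suc L))"
  proof (rule min_principle[OF L1 _ start_SK[OF L1]])
    fix \<eta> assume h: "\<eta> \<in> SK (Suc L)"
    have "(\<Sum>\<zeta>\<in>SK (Suc L). east_rate q (Suc L) \<eta> \<zeta> * w \<zeta>)
       = (\<Sum>\<zeta>\<in>SK (Suc L). east_rate q (Suc L) \<eta> \<zeta> * hK (Suc L) \<zeta>) - (\<Sum>\<zeta>\<in>SK (Suc L). east_rate q (Suc L) \<eta> \<zeta> * g \<zeta>)"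
      by (simp add: w_def right_diff_distrib sum_subtractf)
    also have "\<dots> \<le> 0" using hK_eq[OF L1 h] subsol[OF L h] by (simp add: g_def)
    finally show "(\<Sum>\<zeta>\<in>SK (Suc L). east_rate q (Suc L) \<eta> \<zeta> * w \<zeta>) \<le> 0" .
  qed
  moreover have "g (east_start (Suc L)) = hK L (east_start L)"
  proof -
    have "east_start (Suc L) L" using L by (simp add: east_start_def)
    moreover have "(east_start (Suc L))(L := False) = east_start L" by (auto simp: east_start_def fun_eq_iff)
    ultimately show ?thesis by (simp add: g_def)
  qed
  ultimately show ?thesis by (simp add: w_def)
qed

end

context qpar begin

lemma P_abs: "\<bar>east_P q L a b\<bar> \<le> 2"
proof -
  have "\<bar>east_rate q L a b\<bar> \<le> real L" by (rule rate_abs_le[OF q0' q1'])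
  then have "\<bar>east_rate q L a b / real (Suc L)\<bar> \<le> 1" by (simp add: divide_le_eq abs_divide)
  have "\<bar>east_P q L a b\<bar> \<le> \<bar>if a = b then 1 else 0\<bar> + \<bar>east_rate q L a b / real (Suc L)\<bar>"
    unfolding east_P_def by (rule abs_triangle_ineq)
  also have "\<dots> \<le> 1 + 1" using \<open>\<bar>east_rate q L a b / real (Suc L)\<bar> \<le> 1\<close> by (intro add_mono) auto
  finally show ?thesis by simp
qed

lemma surv_series:
  assumes L: "1 \<le> L" and h: "\<eta> \<in> SK L"
  shows "east_survival q L \<eta> t = exp (- (real (Suc L) * t)) *
     (\<Sum>n. (real (Suc L) * t) ^ n / fact n * Rk L n \<eta>)"
proof -
  let ?S = "SK L" and ?c = "real (Suc L)"
  have e: "mat_exp ?S (east_rate q L) t \<eta> \<sigma> = exp (- (?c * t)) * (\<Sum>n. (?c * t) ^ n / fact n * mat_pow ?S (east_P q L) n \<eta> \<sigma>)" for \<sigma>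
    unfolding east_P_def by (rule mat_exp_unif[OF SK_fin h _ rate_abs_le[OF q0' q1']]) simp
  have "east_survival q L \<eta> t = (\<Sum>\<sigma>\<in>?S. exp (- (?c * t)) * (\<Sum>n. (?c * t) ^ n / fact n * mat_pow ?S (east_P q L) n \<eta> \<sigma>))"
    unfolding east_survival_def target_eq e ..
  also have "\<dots> = exp (- (?c * t)) * (\<Sum>n. \<Sum>\<sigma>\<in>?S. (?c * t) ^ n / fact n * mat_pow ?S (east_P q L) n \<eta> \<sigma>)"
  proof -
    have "(\<Sum>\<sigma>\<in>?S. \<Sum>n. (?c * t) ^ n / fact n * mat_pow ?S (east_P q L) n \<eta> \<sigma>) = (\<Sum>n. \<Sum>\<sigma>\<in>?S. (?c * t) ^ n / fact n * mat_pow ?S (east_P q L) n \<eta> \<sigma>)"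
      by (rule suminf_sum[symmetric]) (rule mat_exp_summable[OF SK_fin P_abs])
    then show ?thesis by (simp add: sum_distrib_left[symmetric])
  qed
  also have "(\<Sum>n. \<Sum>\<sigma>\<in>?S. (?c * t) ^ n / fact n * mat_pow ?S (east_P q L) n \<eta> \<sigma>) = (\<Sum>n. (?c * t) ^ n / fact n * Rk L n \<eta>)"
    by (simp add: Rk_def sum_distrib_left)
  finally show ?thesis .
qed

lemma erlang_int1:
  assumes "0 < c"
  shows "(\<integral>\<^sup>+ x. ennreal (erlang_density k c x) \<partial>lborel) = 1"
  using nn_integral_erlang_ith_moment[OF assms, of k 0] by simp

lemma Thit_eq:
  assumes L: "1 \<le> L"
  shows "T_hit q L = hK L (east_start L)"
proof -
  define \<eta> where "\<eta> = east_start L"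
  have h: "\<eta> \<in> SK L" unfolding \<eta>_def by (rule start_SK[OF L])
  define c where "c = real (Suc L)"
  have c0: "0 < c" by (simp add: c_def)
  define gk where "gk n t = indicator {0..} t * (exp (- (c * t)) * ((c * t) ^ n / fact n * Rk L n \<eta>))" for n and t :: real
  define F where "F t = (if t \<in> {0..} then east_survival q L \<eta> t else 0)" for t :: real
  have gk0: "0 \<le> gk n t" for n t using c0 Rk_nonneg[of L n \<eta>] by (simp add: gk_def indicator_def)
  have sums: "(\<lambda>n. gk n t) sums F t" for t
  proof (cases "t \<in> {0..}")
    case True
    have s: "summable (\<lambda>n. (c * t) ^ n / fact n * Rk L n \<eta>)"
    proof (rule summable_comparison_test'[OF sums_summable[OF exp_sums_real[of "c * t"]]])
      fix n
      have w: "0 \<le> (c * t) ^ n / fact n" using True c0 by simp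
      have "(c * t) ^ n / fact n * Rk L n \<eta> \<le> (c * t) ^ n / fact n"
        by (rule mult_left_le[OF Rk_le1[OF h] w])
      then show "norm ((c * t) ^ n / fact n * Rk L n \<eta>) \<le> (c * t) ^ n / fact n"
      proof -
        have "0 \<le> (c * t) ^ n" using True c0 by simp
        then have "norm ((c * t) ^ n / fact n * Rk L n \<eta>) = (c * t) ^ n / fact n * Rk L n \<eta>"
          using Rk_nonneg[of L n \<eta>] by (simp add: abs_mult)
        then show ?thesis using \<open>(c * t) ^ n / fact n * Rk L n \<eta> \<le> (c * t) ^ n / fact n\<close> by simp
      qed
    qed
    have "(\<lambda>n. exp (- (c * t)) * ((c * t) ^ n / fact n * Rk L n \<eta>)) sums (exp (- (c * t)) * (\<Sum>n. (c * t) ^ n / fact n * Rk L n \<eta>))"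
      by (rule sums_mult[OF summable_sums[OF s]])
    then show ?thesis using True surv_series[OF L h, of t] by (simp add: gk_def F_def c_def)
  next
    case False then show ?thesis by (simp add: gk_def F_def)
  qed
  have Fe: "F = (\<lambda>t. \<Sum>n. gk n t)" using sums by (simp add: fun_eq_iff sums_unique)
  have gkm[measurable]: "gk n \<in> borel_measurable borel" for n unfolding gk_def[abs_def] by measurable
  have Fm: "F \<in> borel_measurable borel" unfolding Fe by measurable
  have F0: "0 \<le> F t" for t unfolding Fe by (rule suminf_nonneg[OF sums_summable[OF sums] gk0])
  have gk_erl: "gk n t = erlang_density n c t * (Rk L n \<eta> / c)" for n t
    using c0 by (simp add: gk_def erlang_density_def indicator_def power_mult_distrib field_simps)
  have int_gk: "(\<integral>\<^sup>+ t. ennreal (gk n t) \<partial>lborel) = ennreal (Rk L n \<eta> / c)" for n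
  proof -
    have "(\<integral>\<^sup>+ t. ennreal (gk n t) \<partial>lborel) = (\<integral>\<^sup>+ t. ennreal (erlang_density n c t) * ennreal (Rk L n \<eta> / c) \<partial>lborel)"
      unfolding gk_erl by (intro nn_integral_cong ennreal_mult) (use c0 Rk_nonneg[of L n \<eta>] in auto)
    also have "\<dots> = (\<integral>\<^sup>+ t. ennreal (erlang_density n c t) \<partial>lborel) * ennreal (Rk L n \<eta> / c)"
      by (rule nn_integral_multc) measurable
    also have "\<dots> = ennreal (Rk L n \<eta> / c)" using erlang_int1[OF c0] by simp
    finally show ?thesis .
  qed
  have sR: "summable (\<lambda>n. Rk L n \<eta> / c)" by (rule summable_divide[OF Rk_summable[OF L h]])
  have "(\<integral>\<^sup>+ t. ennreal (F t) \<partial>lborel) = (\<integral>\<^sup>+ t. (\<Sum>n. ennreal (gk n t)) \<partial>lborel)"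
  proof (intro nn_integral_cong)
    fix t :: real
    show "ennreal (F t) = (\<Sum>n. ennreal (gk n t))"
      using suminf_ennreal2[OF gk0 sums_summable[OF sums]] sums_unique[OF sums] by simp
  qed
  also have "\<dots> = (\<Sum>n. \<integral>\<^sup>+ t. ennreal (gk n t) \<partial>lborel)" by (rule nn_integral_suminf) measurable
  also have "\<dots> = (\<Sum>n. ennreal (Rk L n \<eta> / c))" unfolding int_gk ..
  also have "\<dots> = ennreal (\<Sum>n. Rk L n \<eta> / c)"
    by (rule suminf_ennreal2[OF _ sR]) (use c0 Rk_nonneg in auto)
  also have "(\<Sum>n. Rk L n \<eta> / c) = hK L \<eta>" unfolding hK_def c_def
    by (rule suminf_divide[OF Rk_summable[OF L h]])
  finally have I: "(\<integral>\<^sup>+ t. ennreal (F t) \<partial>lborel) = ennreal (hK L \<eta>)" .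
  have "(F has_integral hK L \<eta>) UNIV"
    by (rule nn_integral_has_integral[OF Fm F0 I hK_nonneg[OF L h]])
  then have "(east_survival q L \<eta> has_integral hK L \<eta>) {0..}"
    unfolding F_def[abs_def] has_integral_restrict_UNIV .
  then show ?thesis unfolding T_hit_def \<eta>_def[symmetric] by (rule integral_unique)
qed

lemma Thit_mono:
  assumes "1 \<le> L" "L \<le> L'"
  shows "T_hit q L \<le> T_hit q L'"
  using assms(2)
proof (induction L' rule: dec_induct)
  case base then show ?case by simp
next
  case (step n)
  have n1: "1 \<le> n" using assms(1) step(1) by simp
  have "T_hit q n \<le> T_hit q (Suc n)" unfolding Thit_eq[OF n1] Thit_eq[OF le_SucI[OF n1]]
    by (rule hK_step[OF n1])
  then show ?case using step(3) by simp
qed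

end

theorem mainTheorem6:
  fixes q :: real
  assumes "0 < q" and "q < 1/2"
  shows "(\<forall>L L'. 1 \<le> L \<longrightarrow> L \<le> L' \<longrightarrow> T_rel q L \<le> T_rel q L') \<and>
         (\<forall>L L'. 1 \<le> L \<longrightarrow> L \<le> L' \<longrightarrow> T_mix q L \<le> T_mix q L') \<and>
         (\<forall>L L'. 1 \<le> L \<longrightarrow> L \<le> L' \<longrightarrow> T_hit q L \<le> T_hit q L')"
proof -
  interpret qpar q using assms by unfold_locales auto
  show ?thesis using Trel_mono Tmix_mono Thit_mono by blast
qed

end
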